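(* Consider the algorithm described in the context, where $\psi$ can be truncated. Assume: (A.1) $\psi$ is bounded from below; (A.2) whenever $g(x)\ne0$, there exist $r,\epsilon>0$ with $\|g(y)\|\ge\epsilon$ for all $y\in B_r(x)$; (B.1) there is $R>0$ with $\{x^k\}\subseteq B_R(0)$; (B.2) there is $\kappa_B>0$ with $\sup_k\|B^k\|\le\kappa_B$; (B.3) for every subsequence $\{k_\ell\}$ such that $\{x^{k_\ell}\}$ converges and $\alpha_{k_\ell}\to0$, $\psi(x^{k_\ell}+\alpha_{k_\ell}\bar s^{k_\ell})-\psi(x^{k_\ell})-\alpha_{k_\ell}\psi'(x^{k_\ell};\bar s^{k_\ell})=o(\alpha_{k_\ell})$ as $\ell\to\infty$; (B.4) for every $\epsilon>0$ there is $\epsilon'>0$ such that $\Gamma(x^k)\ge\epsilon$ implies $\Gamma(x^k,\bar s^k)\ge\epsilon'$. Suppose the algorithm does not terminate after finitely many steps and the generated sequence $\{x^k\}$ has an accumulation point $x^*$. Then $x^*$ is a stationary point, i.e. $0\in\partial\psi(x^* )$.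
   Context: Problem: minimize $\psi=f+\varphi$ where $f:\mathbb{R}^n\to\mathbb{R}$ is continuously differentiable and $\varphi:\mathbb{R}^n\to\mathbb{R}$ is convex. Notation: $\|\cdot\|$ Euclidean norm (Frobenius for matrices), $B_r(x)$ open ball, $\bar v=v/\|v\|$, $\psi'(x;d)$ directional derivative, $\partial\psi(x)=\nabla f(x)+\partial\varphi(x)$; $x$ is stationary if $0\in\partial\psi(x)$. Pseudo-gradient: $g(x)=u(x)d(x)$ where, for non-stationary $x$, $\|d(x)\|=1$, $\psi'(x;d(x))<0$, $u(x)\in[\psi'(x;d(x)),0)$, and for stationary $x$, $d(x)=0$, $u(x)=0$. Safeguards: for $\|d\|=1$, $\Gamma_{\max}(x,d)=\sup\{T>0: t\mapsto\psi(x+td)\text{ is } C^1\text{ on }(0,T)\}$, $\Gamma(x)=\inf_{\|d\|=1}\Gamma_{\max}(x,d)$; a stepsize safeguard $(x,d)\mapsto\Gamma(x,d)\in(0,\infty]$ is fixed. Truncation: $\psi$ can be truncated with data $\mathbb{R}^n=S_0\supset\cdots\supset S_m$, $\delta\in(0,\infty]$, $\kappa>0$, $T:\mathbb{R}^n\times(0,\delta]\to\mathbb{R}^n$ meaning (i) $\Gamma(x)\ge\delta$ on $S_m$; (ii) for $a\in(0,\delta]$, $x\in S_i\setminus S_{i+1}$, $i<m$: if $\Gamma(x)\ge a$ then $T(x,a)=x$, else $T(x,a)\in S_{i+1}$, $\Gamma(T(x,a))\ge a$, $\|T(x,a)-x\|\le\kappa a$. Put $S_{m+1}=\emptyset$.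 Algorithm: parameters $0<\eta<\eta_1<\eta_2<1$, $0<r_1<1<r_2$, $\Delta_{\max}>0$, $\gamma_1,\gamma_2>0$, a positive strictly decreasing summable sequence $(\epsilon_s)$ with $\epsilon_s\le\delta$, a nonincreasing $\ell:(0,\infty)\to[0,\frac12]$ with $\ell(\Delta)\to0$ as $\Delta\to0^+$; start $x^0$, $\Delta_0>0$, counters $c_0=\dots=c_m=0$. Iteration $k$: $g^k=g(x^k)$; stop if $g^k=0$. Choose $B^k\in\mathbb{R}^{n\times n}$, model $m_k(s)=\psi(x^k)+\langle g^k,s\rangle+\frac12\langle s,B^ks\rangle$, Cauchy point $s^k_C=-\alpha^C_kg^k$ with $\alpha^C_k\in\arg\min_{0\le t\le\Delta_k/\|g^k\|}m_k(-tg^k)$. Choose $s^k$, $\|s^k\|\le\Delta_k$, with $m_k(0)-m_k(s^k)\ge\frac{\gamma_1}{2}\|g^k\|\min\{\Delta_k,\gamma_2\|g^k\|\}$ and $m_k(0)-m_k(s^k)\ge(1-\ell(\|s^k\|))(m_k(0)-m_k(s^k_C))$. Let $\rho^1_k=\frac{\psi(x^k)-\psi(x^k+s^k)}{m_k(0)-m_k(s^k)}$. If $\rho^1_k\ge\eta_1$: $\tilde x^k=x^k+s^k$, $\Delta_{k+1}=\min\{\Delta_{\max},r_2\Delta_k\}$ if $\rho^1_k>\eta_2$ and $\Delta_{k+1}=\Delta_k$ otherwise. Stepsize computation (performed for the analysis in every iteration, used by the algorithm when $\rho^1_k<\eta_1$): $\alpha_k=\min\{\Gamma(x^k,\bar s^k),\|s^k\|\}$;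 if $m_k(0)-m_k(\alpha_k\bar s^k)<\frac{\alpha_k}{2\|s^k\|}(m_k(0)-m_k(s^k))$, replace $s^k$ by $s^k_C$ and $\alpha_k=\min\{\Gamma(x^k,\bar s^k_C),\|s^k_C\|\}$; $\rho^2_k=\frac{\psi(x^k)-\psi(x^k+\alpha_k\bar s^k)}{m_k(0)-m_k(\alpha_k\bar s^k)}$. If $\rho^1_k<\eta_1$: $\Delta_{k+1}=r_1\Delta_k$ if $\rho^2_k<\eta_1$, $=\min\{\Delta_{\max},r_2\Delta_k\}$ if $\rho^2_k>\eta_2$, $=\Delta_k$ otherwise; $\tilde x^k=x^k+\alpha_k\bar s^k$ if $\rho^2_k\ge\eta$ and $\tilde x^k=x^k$ otherwise. Truncation step: set $\tilde x=\tilde x^k$ and repeat {find $i$ with $\tilde x\in S_i\setminus S_{i+1}$; if $\Gamma(\tilde x)<\epsilon_{c_i}$ set $\tilde x\leftarrow T(\tilde x,\epsilon_{c_i})$, $c_i\leftarrow c_i+1$; else stop}; $x^{k+1}=\tilde x$. Here $\alpha_k,\bar s^k$ denote the quantities of the stepsize computation. *)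

theory Defs
  imports "HOL-Analysis.Analysis" "HOL-Library.Landau_Symbols"
begin

definition dirderiv :: "('a::real_normed_vector \<Rightarrow> real) \<Rightarrow> 'a \<Rightarrow> 'a \<Rightarrow> real" where
  "dirderiv h x v = Lim (at_right 0) (\<lambda>t. (h (x + t *\<^sub>R v) - h x) / t)"

definition subdiff :: "('a::real_inner \<Rightarrow> real) \<Rightarrow> 'a \<Rightarrow> 'a set" where
  "subdiff \<phi> x = {v. \<forall>y. \<phi> y \<ge> \<phi> x + inner v (y - x)}"

definition psi_subdiff :: "('a::real_inner \<Rightarrow> 'a) \<Rightarrow> ('a \<Rightarrow> real) \<Rightarrow> 'a \<Rightarrow> 'a set" where
  "psi_subdiff gradf \<phi> x = (\<lambda>v. gradf x + v) ` subdiff \<phi> x"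

definition stationary :: "('a::real_inner \<Rightarrow> 'a) \<Rightarrow> ('a \<Rightarrow> real) \<Rightarrow> 'a \<Rightarrow> bool" where
  "stationary gradf \<phi> x \<longleftrightarrow> 0 \<in> psi_subdiff gradf \<phi> x"

definition Gamma_max :: "('a::real_normed_vector \<Rightarrow> real) \<Rightarrow> 'a \<Rightarrow> 'a \<Rightarrow> ereal" where
  "Gamma_max h x v = Sup {ereal T | T. T > 0 \<and> (\<lambda>t. h (x + t *\<^sub>R v)) C1_differentiable_on {0<..<T}}"

definition Gamma_pt :: "('a::real_normed_vector \<Rightarrow> real) \<Rightarrow> 'a \<Rightarrow> ereal" where
  "Gamma_pt h x = Inf {Gamma_max h x v | v. norm v = 1}"

definition level :: "(nat \<Rightarrow> 'a set) \<Rightarrow> nat \<Rightarrow> 'a \<Rightarrow> nat" where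
  "level S m x = (THE i. i \<le> m \<and> x \<in> S i \<and> (i < m \<longrightarrow> x \<notin> S (Suc i)))"

definition truncatable ::
  "('a::real_normed_vector \<Rightarrow> ereal) \<Rightarrow> (nat \<Rightarrow> 'a set) \<Rightarrow> nat \<Rightarrow> ereal \<Rightarrow> real \<Rightarrow> ('a \<Rightarrow> real \<Rightarrow> 'a) \<Rightarrow> bool" where
  "truncatable \<Gamma> S m \<delta> \<kappa> T \<longleftrightarrow>
     S 0 = UNIV \<and> (\<forall>i<m. S (Suc i) \<subseteq> S i) \<and> \<delta> > 0 \<and> \<kappa> > 0 \<and>
     (\<forall>x\<in>S m. \<Gamma> x \<ge> \<delta>) \<and>
     (\<forall>a i x. 0 < a \<and> ereal a \<le> \<delta> \<and> i < m \<and> x \<in> S i \<and> x \<notin> S (Suc i) \<longrightarrow>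
        (\<Gamma> x \<ge> ereal a \<longrightarrow> T x a = x) \<and>
        (\<Gamma> x < ereal a \<longrightarrow> T x a \<in> S (Suc i) \<and> \<Gamma> (T x a) \<ge> ereal a \<and>
                             norm (T x a - x) \<le> \<kappa> * a))"

text \<open>The truncation loop: trunc_run Gamma S m eps T x c x' c' means that the loop started at
  point x with counters c terminates with point x' and counters c'.\<close>
inductive trunc_run ::
  "('a \<Rightarrow> ereal) \<Rightarrow> (nat \<Rightarrow> 'a set) \<Rightarrow> nat \<Rightarrow> (nat \<Rightarrow> real) \<Rightarrow> ('a \<Rightarrow> real \<Rightarrow> 'a)
    \<Rightarrow> 'a \<Rightarrow> (nat \<Rightarrow> nat) \<Rightarrow> 'a \<Rightarrow> (nat \<Rightarrow> nat) \<Rightarrow> bool"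
  for \<Gamma> S m \<epsilon> T where
  stop: "\<Gamma> x \<ge> ereal (\<epsilon> (c (level S m x))) \<Longrightarrow> trunc_run \<Gamma> S m \<epsilon> T x c x c"
| step: "i = level S m x \<Longrightarrow> \<Gamma> x < ereal (\<epsilon> (c i)) \<Longrightarrow>
         trunc_run \<Gamma> S m \<epsilon> T (T x (\<epsilon> (c i))) (c(i := Suc (c i))) x' c' \<Longrightarrow>
         trunc_run \<Gamma> S m \<epsilon> T x c x' c'"

end

theory Submission
  imports Defs
begin


lemma chain_sub:
  assumes "\<forall>i<m. S (Suc i) \<subseteq> S i"
  shows "i \<le> j \<Longrightarrow> j \<le> m \<Longrightarrow> S j \<subseteq> S i"
proof (induction j)
  case 0 then show ?case by simp
next
  case (Suc j)
  show ?case
  proof (cases "i = Suc j")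
    case False
    then have "i \<le> j" using Suc by simp
    then have "S j \<subseteq> S i" using Suc by simp
    moreover have "S (Suc j) \<subseteq> S j" using assms Suc by simp
    ultimately show ?thesis by blast
  qed simp
qed

lemma level_props:
  assumes S0: "S 0 = UNIV" and ch: "\<forall>i<m. S (Suc i) \<subseteq> S i"
  shows "level S m y \<le> m \<and> y \<in> S (level S m y) \<and> (level S m y < m \<longrightarrow> y \<notin> S (Suc (level S m y)))"
proof -
  define A where "A = {j. j \<le> m \<and> y \<in> S j}"
  have fin: "finite A" unfolding A_def by simp
  have "0 \<in> A" unfolding A_def using S0 by simp
  define i where "i = Max A"
  have iA: "i \<in> A" unfolding i_def using fin \<open>0 \<in> A\<close> Max_in by blast
  have imax: "\<And>j. j \<in> A \<Longrightarrow> j \<le> i" unfolding i_def using fin by simp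
  have P: "i \<le> m \<and> y \<in> S i \<and> (i < m \<longrightarrow> y \<notin> S (Suc i))"
    using iA imax[of "Suc i"] unfolding A_def by auto
  have U: "j = i" if "j \<le> m \<and> y \<in> S j \<and> (j < m \<longrightarrow> y \<notin> S (Suc j))" for j
  proof (rule ccontr)
    assume "j \<noteq> i"
    have "j \<le> i" using imax[of j] that unfolding A_def by auto
    then have "j < i" using \<open>j \<noteq> i\<close> by simp
    then have "S i \<subseteq> S (Suc j)" using chain_sub[OF ch, of "Suc j" i] P by simp
    then show False using that P \<open>j < i\<close> by auto
  qed
  have "level S m y = i"
    unfolding level_def by (rule the_equality, rule P, rule U)
  then show ?thesis using P by simp
qed

lemma level_ge:
  assumes S0: "S 0 = UNIV" and ch: "\<forall>i<m. S (Suc i) \<subseteq> S i"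
    and "y \<in> S j" "j \<le> m"
  shows "j \<le> level S m y"
proof (rule ccontr)
  assume "\<not> j \<le> level S m y"
  then have "Suc (level S m y) \<le> j" by simp
  then have "S j \<subseteq> S (Suc (level S m y))" using chain_sub[OF ch] assms by simp
  then show False using level_props[OF S0 ch, of y] assms \<open>Suc (level S m y) \<le> j\<close> by auto
qed

definition Pc :: "nat \<Rightarrow> (nat \<Rightarrow> real) \<Rightarrow> (nat \<Rightarrow> nat) \<Rightarrow> real" where
  "Pc m \<epsilon> c = (\<Sum>j\<le>m. \<Sum>l<c j. \<epsilon> l)"

lemma Pc_upd:
  assumes "i \<le> m"
  shows "Pc m \<epsilon> (c(i := Suc (c i))) = Pc m \<epsilon> c + \<epsilon> (c i)"
proof -
  have "(\<Sum>j\<le>m. \<Sum>l<(c(i := Suc (c i))) j. \<epsilon> l) = (\<Sum>j\<le>m. (\<Sum>l<c j. \<epsilon> l) + (if j = i then \<epsilon> (c i) else 0))"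
    by (rule sum.cong) auto
  also have "\<dots> = Pc m \<epsilon> c + \<epsilon> (c i)"
    unfolding Pc_def sum.distrib using assms by simp
  finally show ?thesis unfolding Pc_def .
qed

lemma trunc_run_props:
  assumes tr: "truncatable \<Gamma> S m \<delta> \<kappa> T"
    and epos: "\<forall>j. \<epsilon> j > 0" and eled: "\<forall>j. ereal (\<epsilon> j) \<le> \<delta>"
  shows "trunc_run \<Gamma> S m \<epsilon> T x c x' c' \<Longrightarrow>
    (\<forall>j. c j \<le> c' j) \<and> level S m x \<le> level S m x' \<and> (\<forall>j. c j < c' j \<longrightarrow> j < level S m x')
    \<and> \<Gamma> x' \<ge> ereal (\<epsilon> (c' (level S m x'))) \<and> norm (x' - x) \<le> \<kappa> * (Pc m \<epsilon> c' - Pc m \<epsilon> c)"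
proof (induction rule: trunc_run.induct)
  case (stop x c)
  then show ?case by simp
next
  case (step i x c x' c')
  have S0: "S 0 = UNIV" and ch: "\<forall>i<m. S (Suc i) \<subseteq> S i" and kp: "\<kappa> > 0"
    using tr unfolding truncatable_def by auto
  note lp = level_props[OF S0 ch, of x]
  have im: "i \<le> m" using lp step by simp
  have "i \<noteq> m"
  proof
    assume "i = m"
    then have "x \<in> S m" using lp step by simp
    then have "\<Gamma> x \<ge> \<delta>" using tr unfolding truncatable_def by auto
    then have "\<Gamma> x \<ge> ereal (\<epsilon> (c i))" using eled order_trans by metis
    then show False using step by simp
  qed
  then have im': "i < m" using im by simp
  have xi: "x \<in> S i" "x \<notin> S (Suc i)" using lp step im' by auto
  define a where "a = \<epsilon> (c i)"
  have a: "0 < a" "ereal a \<le> \<delta>" using epos eled unfolding a_def by auto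
  have T: "T x a \<in> S (Suc i)" "norm (T x a - x) \<le> \<kappa> * a"
    using tr a im' xi step(2) unfolding truncatable_def a_def[symmetric] by blast+
  have lT: "Suc i \<le> level S m (T x a)" using level_ge[OF S0 ch T(1)] im' by simp
  note IH = step.IH[folded a_def]
  have c1: "\<forall>j. c j \<le> c' j"
  proof
    fix j
    have "c j \<le> (c(i := Suc (c i))) j" by simp
    then show "c j \<le> c' j" using IH by (meson order_trans)
  qed
  have c3: "\<forall>j. c j < c' j \<longrightarrow> j < level S m x'"
  proof (intro allI impI)
    fix j assume "c j < c' j"
    show "j < level S m x'"
    proof (cases "j = i")
      case True then show ?thesis using lT IH by simp
    next
      case False then show ?thesis using IH \<open>c j < c' j\<close> by (metis fun_upd_other)
    qed
  qed
  have "norm (x' - x) \<le> norm (x' - T x a) + norm (T x a - x)"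
    using norm_triangle_ineq[of "x' - T x a" "T x a - x"] by simp
  also have "\<dots> \<le> \<kappa> * (Pc m \<epsilon> c' - Pc m \<epsilon> (c(i := Suc (c i)))) + \<kappa> * a"
    using IH T(2) by (intro add_mono) blast+
  also have "\<dots> = \<kappa> * (Pc m \<epsilon> c' - Pc m \<epsilon> c)"
    using Pc_upd[OF im, of \<epsilon> c] unfolding a_def by (simp add: algebra_simps)
  finally show ?case using c1 c3 IH lp lT step(1) by auto
qed

lemma trunc_run_stop:
  assumes "trunc_run \<Gamma> S m \<epsilon> T x c x' c'" "\<Gamma> x \<ge> ereal (\<epsilon> (c (level S m x)))"
  shows "x' = x \<and> c' = c"
  using assms by (cases rule: trunc_run.cases) auto




lemma convex_lip:
  fixes \<phi> :: "'a::euclidean_space \<Rightarrow> real"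
  assumes cv: "convex_on UNIV \<phi>"
  shows "\<exists>L\<ge>0. \<forall>x y. norm x \<le> \<rho> \<longrightarrow> norm y \<le> \<rho> \<longrightarrow> \<phi> y - \<phi> x \<le> L * norm (y - x)"
proof -
  have "continuous_on UNIV \<phi>" using convex_on_continuous[OF open_UNIV cv] .
  then have "compact (\<phi> ` cball 0 (\<rho> + 1))"
    by (intro compact_continuous_image) (auto intro: continuous_on_subset)
  then obtain M0 where M0': "\<And>z. z \<in> cball 0 (\<rho> + 1) \<Longrightarrow> \<bar>\<phi> z\<bar> \<le> M0"
    using compact_imp_bounded bounded_real by (metis image_eqI)
  define M where "M = max M0 0"
  have M: "\<And>z. z \<in> cball 0 (\<rho> + 1) \<Longrightarrow> \<bar>\<phi> z\<bar> \<le> M" using M0' unfolding M_def by force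
  have M0: "M \<ge> 0" unfolding M_def by simp
  show ?thesis
  proof (intro exI[of _ "2*M"] conjI allI impI)
    show "0 \<le> 2 * M" using M0 by simp
    fix x y :: 'a assume x: "norm x \<le> \<rho>" and y: "norm y \<le> \<rho>"
    show "\<phi> y - \<phi> x \<le> 2 * M * norm (y - x)"
    proof (cases "x = y")
      case True then show ?thesis by simp
    next
      case False
      define h where "h = norm (y - x)"
      have h0: "h > 0" using False unfolding h_def by simp
      define z where "z = y + (1/h) *\<^sub>R (y - x)"
      have "norm z \<le> norm y + norm ((1/h) *\<^sub>R (y - x))" unfolding z_def by (rule norm_triangle_ineq)
      also have "norm ((1/h) *\<^sub>R (y - x)) = 1" using h0 unfolding h_def by simp
      finally have zb: "z \<in> cball 0 (\<rho> + 1)" using y by simp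
      have xb: "x \<in> cball 0 (\<rho> + 1)" using x by simp
      define lam where "lam = h / (1 + h)"
      have l: "0 \<le> lam" "lam \<le> 1" "lam \<le> h" using h0 unfolding lam_def by (auto simp: field_simps)
      have "(1 - lam) *\<^sub>R x + lam *\<^sub>R z = x + (lam + lam/h) *\<^sub>R (y - x)"
        unfolding z_def by (simp add: algebra_simps)
      also have "lam + lam/h = 1"
  proof -
    have "lam/h = 1/(1+h)" using h0 unfolding lam_def by simp
    then have "lam + lam/h = h/(1+h) + 1/(1+h)" unfolding lam_def by simp
    also have "\<dots> = (h+1)/(1+h)" by (simp add: add_divide_distrib)
    also have "\<dots> = 1" using h0 by simp
    finally show ?thesis .
  qed
      finally have yeq: "(1 - lam) *\<^sub>R x + lam *\<^sub>R z = y" by simp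
      have "\<phi> y \<le> (1 - lam) * \<phi> x + lam * \<phi> z"
        using convex_onD[OF cv, of lam x z] l yeq by simp
      then have "\<phi> y - \<phi> x \<le> lam * (\<phi> z - \<phi> x)" by (simp add: algebra_simps)
      also have "\<dots> \<le> lam * (2*M)"
        using M[OF zb] M[OF xb] l by (intro mult_left_mono) auto
      also have "\<dots> \<le> h * (2*M)" using l M0 by (intro mult_right_mono) auto
      finally show ?thesis unfolding h_def by (simp add: ac_simps)
    qed
  qed
qed

lemma grad_lip:
  fixes f :: "'a::euclidean_space \<Rightarrow> real"
  assumes fg: "\<forall>y. GDERIV f y :> gradf y" and gc: "continuous_on UNIV gradf"
  shows "\<exists>L\<ge>0. \<forall>x y. norm x \<le> \<rho> \<longrightarrow> norm y \<le> \<rho> \<longrightarrow> f y - f x \<le> L * norm (y - x)"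
proof -
  have "compact (gradf ` cball 0 \<rho>)"
    by (intro compact_continuous_image) (auto intro: continuous_on_subset[OF gc])
  then obtain M0 where M0': "\<And>z. z \<in> cball 0 \<rho> \<Longrightarrow> norm (gradf z) \<le> M0"
    using compact_imp_bounded bounded_iff by (metis image_eqI)
  define M where "M = max M0 0"
  have M: "\<And>z. z \<in> cball 0 \<rho> \<Longrightarrow> norm (gradf z) \<le> M" using M0' unfolding M_def by force
  have M0: "M \<ge> 0" unfolding M_def by simp
  show ?thesis
  proof (intro exI[of _ M] conjI allI impI)
    fix x y :: 'a assume x: "norm x \<le> \<rho>" and y: "norm y \<le> \<rho>"
    have d: "(f has_derivative (\<lambda>h. inner h (gradf z))) (at z within cball 0 \<rho>)" for z
      using fg unfolding gderiv_def by (blast intro: has_derivative_at_withinI)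
    have o: "onorm (\<lambda>h. inner h (gradf z)) \<le> M" if "z \<in> cball 0 \<rho>" for z
    proof -
      show ?thesis using onorm_inner_left[OF bounded_linear_ident, of "gradf z"] M[OF that] by (simp add: onorm_id)
    qed
    have "norm (f y - f x) \<le> M * norm (y - x)"
      by (rule differentiable_bound[OF convex_cball d o]) (use x y in auto)
    then show "f y - f x \<le> M * norm (y - x)" by simp
  qed (use M0 in auto)
qed

lemma psi_lip:
  fixes f :: "'a::euclidean_space \<Rightarrow> real"
  assumes fg: "\<forall>y. GDERIV f y :> gradf y" and gc: "continuous_on UNIV gradf"
    and cv: "convex_on UNIV \<phi>"
  shows "\<exists>L>0. \<forall>x y. norm x \<le> \<rho> \<longrightarrow> norm y \<le> \<rho> \<longrightarrow> \<bar>(f y + \<phi> y) - (f x + \<phi> x)\<bar> \<le> L * norm (y - x)"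
proof -
  obtain L1 where L1: "L1 \<ge> 0" "\<forall>x y. norm x \<le> \<rho> \<longrightarrow> norm y \<le> \<rho> \<longrightarrow> f y - f x \<le> L1 * norm (y - x)"
    using grad_lip[OF fg gc] by blast
  obtain L2 where L2: "L2 \<ge> 0" "\<forall>x y. norm x \<le> \<rho> \<longrightarrow> norm y \<le> \<rho> \<longrightarrow> \<phi> y - \<phi> x \<le> L2 * norm (y - x)"
    using convex_lip[OF cv] by blast
  show ?thesis
  proof (intro exI[of _ "L1 + L2 + 1"] conjI allI impI)
    fix x y :: 'a assume x: "norm x \<le> \<rho>" and y: "norm y \<le> \<rho>"
    have a: "f y - f x \<le> L1 * norm (y - x)" "f x - f y \<le> L1 * norm (y - x)"
      using L1(2) x y by (auto simp: norm_minus_commute)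
    have b: "\<phi> y - \<phi> x \<le> L2 * norm (y - x)" "\<phi> x - \<phi> y \<le> L2 * norm (y - x)"
      using L2(2) x y by (auto simp: norm_minus_commute)
    have n: "0 \<le> norm (y - x)" by simp
    have "\<bar>(f y + \<phi> y) - (f x + \<phi> x)\<bar> \<le> (L1 + L2) * norm (y - x)"
      using a b by (simp add: abs_le_iff distrib_right)
    also have "\<dots> \<le> (L1 + L2 + 1) * norm (y - x)" using n by (intro mult_right_mono) auto
    finally show "\<bar>(f y + \<phi> y) - (f x + \<phi> x)\<bar> \<le> (L1 + L2 + 1) * norm (y - x)" .
  qed (use L1 L2 in auto)
qed

lemma convex_dq_tendsto:
  fixes \<phi> :: "'a::real_normed_vector \<Rightarrow> real"
  assumes cv: "convex_on UNIV \<phi>"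
  shows "\<exists>l. ((\<lambda>t. (\<phi> (y + t *\<^sub>R v) - \<phi> y) / t) \<longlongrightarrow> l) (at_right 0)"
proof -
  define q where "q t = (\<phi> (y + t *\<^sub>R v) - \<phi> y) / t" for t
  have mono: "q s \<le> q t" if "0 < s" "s \<le> t" for s t
  proof -
    define lam where "lam = s / t"
    have l: "0 \<le> lam" "lam \<le> 1" using that unfolding lam_def by auto
    have "(1 - lam) *\<^sub>R y + lam *\<^sub>R (y + t *\<^sub>R v) = y + (lam * t) *\<^sub>R v"
      by (simp add: algebra_simps)
    also have "lam * t = s" using that unfolding lam_def by simp
    finally have "(1 - lam) *\<^sub>R y + lam *\<^sub>R (y + t *\<^sub>R v) = y + s *\<^sub>R v" .
    then have "\<phi> (y + s *\<^sub>R v) \<le> (1 - lam) * \<phi> y + lam * \<phi> (y + t *\<^sub>R v)"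
      using convex_onD[OF cv, of lam y "y + t *\<^sub>R v"] l by simp
    then have "\<phi> (y + s *\<^sub>R v) - \<phi> y \<le> (s/t) * (\<phi> (y + t *\<^sub>R v) - \<phi> y)"
      unfolding lam_def by (simp add: algebra_simps)
    then show ?thesis unfolding q_def using that by (simp add: field_simps)
  qed
  have lb: "\<phi> y - \<phi> (y - v) \<le> q t" if "0 < t" for t
  proof -
    define lam where "lam = t / (1 + t)"
    have l: "0 \<le> lam" "lam \<le> 1" using that unfolding lam_def by auto
    have "(1 - lam) *\<^sub>R (y + t *\<^sub>R v) + lam *\<^sub>R (y - v) = ((1 - lam) + lam) *\<^sub>R y + ((1 - lam) * t - lam) *\<^sub>R v"
      by (simp add: algebra_simps)
    also have "(1 - lam) * t - lam = 0" using that unfolding lam_def by (simp add: field_simps)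
    finally have "(1 - lam) *\<^sub>R (y + t *\<^sub>R v) + lam *\<^sub>R (y - v) = y" by simp
    then have "\<phi> y \<le> (1 - lam) * \<phi> (y + t *\<^sub>R v) + lam * \<phi> (y - v)"
      using convex_onD[OF cv, of lam "y + t *\<^sub>R v" "y - v"] l by simp
    then have "(1 + t) * \<phi> y \<le> (1 + t) * ((1 - lam) * \<phi> (y + t *\<^sub>R v) + lam * \<phi> (y - v))"
      using that by (intro mult_left_mono) auto
    also have "\<dots> = ((1 + t) * (1 - lam)) * \<phi> (y + t *\<^sub>R v) + ((1 + t) * lam) * \<phi> (y - v)"
      by (simp add: algebra_simps)
    also have "\<dots> = \<phi> (y + t *\<^sub>R v) + t * \<phi> (y - v)"
    proof -
      have e1: "(1 + t) * (1 - lam) = 1" and e2: "(1 + t) * lam = t"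
        using that unfolding lam_def by (simp_all add: field_simps)
      show ?thesis unfolding e1 e2 by simp
    qed
    finally have "(1 + t) * \<phi> y \<le> \<phi> (y + t *\<^sub>R v) + t * \<phi> (y - v)" .
    then show ?thesis unfolding q_def using that by (simp add: field_simps)
  qed
  define l where "l = Inf (q ` {0<..})"
  have bdd: "bdd_below (q ` {0<..})" using lb by (auto intro!: bdd_belowI)
  have "(q \<longlongrightarrow> l) (at_right 0)"
  proof (rule order_tendstoI)
    fix a assume "a < l"
    have "\<forall>t>0. a < q t" using cInf_lower[OF _ bdd] \<open>a < l\<close> unfolding l_def
      by (metis greaterThan_iff image_eqI less_le_trans)
    then show "eventually (\<lambda>t. a < q t) (at_right 0)"
      by (auto simp: eventually_at_right_field intro: exI[of _ 1])
  next
    fix a assume "l < a"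
    then obtain t0 where t0: "t0 > 0" "q t0 < a"
      using cInf_lessD[of "q ` {0<..}" a] unfolding l_def by auto
    then show "eventually (\<lambda>t. q t < a) (at_right 0)"
      unfolding eventually_at_right_field using mono
      by (intro exI[of _ t0]) (auto, meson le_less_trans less_imp_le)
  qed
  then show ?thesis unfolding q_def by blast
qed

lemma smooth_dq_tendsto:
  fixes f :: "'a::real_inner \<Rightarrow> real"
  assumes fg: "GDERIV f y :> D"
  shows "((\<lambda>t. (f (y + t *\<^sub>R v) - f y) / t) \<longlongrightarrow> inner v D) (at_right 0)"
proof -
  have d1: "((\<lambda>t. y + t *\<^sub>R v) has_derivative (\<lambda>t. t *\<^sub>R v)) (at 0)"
    by (auto intro!: derivative_eq_intros)
  have d2: "(f has_derivative (\<lambda>h. inner h D)) (at (y + 0 *\<^sub>R v))"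
    using fg unfolding gderiv_def by simp
  have "((\<lambda>t. f (y + t *\<^sub>R v)) has_derivative (\<lambda>t. inner (t *\<^sub>R v) D)) (at 0)"
    using has_derivative_compose[OF d1 d2] by (simp add: o_def)
  moreover have "(\<lambda>t. inner (t *\<^sub>R v) D) = (\<lambda>t. inner v D * t)" by (auto simp: fun_eq_iff)
  ultimately have "((\<lambda>t. f (y + t *\<^sub>R v)) has_field_derivative inner v D) (at 0)"
    by (simp add: has_field_derivative_def)
  then have "((\<lambda>h. (f (y + (0 + h) *\<^sub>R v) - f (y + 0 *\<^sub>R v)) / h) \<longlongrightarrow> inner v D) (at 0)"
    unfolding DERIV_def .
  then have "((\<lambda>h. (f (y + h *\<^sub>R v) - f y) / h) \<longlongrightarrow> inner v D) (at 0)" by simp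
  then show ?thesis by (rule tendsto_mono[OF at_le, rotated]) simp
qed

lemma dirderiv_tendsto:
  fixes f :: "'a::euclidean_space \<Rightarrow> real"
  assumes fg: "\<forall>y. GDERIV f y :> gradf y" and cv: "convex_on UNIV \<phi>"
    and psi: "\<psi> = (\<lambda>y. f y + \<phi> y)"
  shows "((\<lambda>t. (\<psi> (y + t *\<^sub>R v) - \<psi> y) / t) \<longlongrightarrow> dirderiv \<psi> y v) (at_right 0)"
proof -
  obtain l where l: "((\<lambda>t. (\<phi> (y + t *\<^sub>R v) - \<phi> y) / t) \<longlongrightarrow> l) (at_right 0)"
    using convex_dq_tendsto[OF cv] by blast
  have "((\<lambda>t. (f (y + t *\<^sub>R v) - f y) / t + (\<phi> (y + t *\<^sub>R v) - \<phi> y) / t) \<longlongrightarrow> inner v (gradf y) + l) (at_right 0)"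
    by (intro tendsto_add l smooth_dq_tendsto) (use fg in auto)
  then have T: "((\<lambda>t. (\<psi> (y + t *\<^sub>R v) - \<psi> y) / t) \<longlongrightarrow> inner v (gradf y) + l) (at_right 0)"
    unfolding psi by (simp add: add_divide_distrib[symmetric] algebra_simps)
  then have "dirderiv \<psi> y v = inner v (gradf y) + l"
    unfolding dirderiv_def by (intro tendsto_Lim) auto
  then show ?thesis using T by simp
qed

lemma dirderiv_lip:
  fixes \<psi> :: "'a::real_normed_vector \<Rightarrow> real"
  assumes T: "\<And>v. ((\<lambda>t. (\<psi> (y + t *\<^sub>R v) - \<psi> y) / t) \<longlongrightarrow> dirderiv \<psi> y v) (at_right 0)"
    and L: "\<forall>a b. norm a \<le> \<rho> \<longrightarrow> norm b \<le> \<rho> \<longrightarrow> \<bar>\<psi> b - \<psi> a\<bar> \<le> L * norm (b - a)"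
    and y: "norm y < \<rho>"
  shows "\<bar>dirderiv \<psi> y v - dirderiv \<psi> y w\<bar> \<le> L * norm (v - w)"
proof -
  define D where "D = 1 + norm v + norm w"
  have D0: "D > 0" unfolding D_def by (simp add: add_pos_nonneg)
  define r where "r = (\<rho> - norm y) / D"
  have r0: "r > 0" using y D0 unfolding r_def by simp
  have ev: "eventually (\<lambda>t. \<bar>(\<psi> (y + t *\<^sub>R v) - \<psi> y) / t - (\<psi> (y + t *\<^sub>R w) - \<psi> y) / t\<bar> \<le> L * norm (v - w)) (at_right 0)"
    unfolding eventually_at_right_field
  proof (intro exI[of _ r] conjI allI impI)
    fix t :: real assume t: "0 < t" "t < r"
    have tb: "t * D < \<rho> - norm y"
      using t(2) unfolding r_def by (simp add: pos_less_divide_eq[OF D0])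
    have tv: "t * norm v \<le> t * D" "t * norm w \<le> t * D" using t unfolding D_def by (auto intro!: mult_left_mono)
    have "norm (t *\<^sub>R v) = t * norm v" "norm (t *\<^sub>R w) = t * norm w" using t by auto
    then have nv: "norm (y + t *\<^sub>R v) \<le> \<rho>" and nw: "norm (y + t *\<^sub>R w) \<le> \<rho>"
      using norm_triangle_ineq[of y "t *\<^sub>R v"] norm_triangle_ineq[of y "t *\<^sub>R w"] tb tv by linarith+
    have "\<bar>\<psi> (y + t *\<^sub>R v) - \<psi> (y + t *\<^sub>R w)\<bar> \<le> L * norm ((y + t *\<^sub>R v) - (y + t *\<^sub>R w))"
      using L nv nw by blast
    also have "norm ((y + t *\<^sub>R v) - (y + t *\<^sub>R w)) = t * norm (v - w)"
      using t by (simp add: scaleR_diff_right[symmetric])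
    finally have "\<bar>\<psi> (y + t *\<^sub>R v) - \<psi> (y + t *\<^sub>R w)\<bar> / t \<le> L * norm (v - w)"
      using t by (simp add: field_simps)
    moreover have "(\<psi> (y + t *\<^sub>R v) - \<psi> y) / t - (\<psi> (y + t *\<^sub>R w) - \<psi> y) / t = (\<psi> (y + t *\<^sub>R v) - \<psi> (y + t *\<^sub>R w)) / t"
      by (simp add: diff_divide_distrib)
    ultimately show "\<bar>(\<psi> (y + t *\<^sub>R v) - \<psi> y) / t - (\<psi> (y + t *\<^sub>R w) - \<psi> y) / t\<bar> \<le> L * norm (v - w)"
      using t by simp
  qed (rule r0)
  have "((\<lambda>t. \<bar>(\<psi> (y + t *\<^sub>R v) - \<psi> y) / t - (\<psi> (y + t *\<^sub>R w) - \<psi> y) / t\<bar>) \<longlongrightarrow> \<bar>dirderiv \<psi> y v - dirderiv \<psi> y w\<bar>) (at_right 0)"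
    by (intro tendsto_rabs tendsto_diff T)
  then show ?thesis using ev by (rule tendsto_upperbound) simp
qed




locale alg =
  fixes f :: "real^'n \<Rightarrow> real" and gradf :: "real^'n \<Rightarrow> real^'n" and \<phi> :: "real^'n \<Rightarrow> real"
    and u :: "real^'n \<Rightarrow> real" and d :: "real^'n \<Rightarrow> real^'n"
    and \<Gamma>s :: "real^'n \<Rightarrow> real^'n \<Rightarrow> ereal"
    and S :: "nat \<Rightarrow> (real^'n) set" and m :: nat and \<delta> :: ereal and \<kappa> :: real
    and T :: "real^'n \<Rightarrow> real \<Rightarrow> real^'n"
    and \<eta> \<eta>1 \<eta>2 r1 r2 \<Delta>max \<gamma>1 \<gamma>2 :: real
    and \<epsilon> :: "nat \<Rightarrow> real" and ell :: "real \<Rightarrow> real"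
    and x :: "nat \<Rightarrow> real^'n" and \<Delta> :: "nat \<Rightarrow> real" and B :: "nat \<Rightarrow> real^'n^'n"
    and s :: "nat \<Rightarrow> real^'n" and \<alpha>C :: "nat \<Rightarrow> real" and xt :: "nat \<Rightarrow> real^'n"
    and c :: "nat \<Rightarrow> nat \<Rightarrow> nat" and xstar :: "real^'n"
    and \<psi> :: "real^'n \<Rightarrow> real" and gp :: "real^'n \<Rightarrow> real^'n" and g :: "nat \<Rightarrow> real^'n"
    and mdl :: "nat \<Rightarrow> real^'n \<Rightarrow> real" and sC :: "nat \<Rightarrow> real^'n" and \<rho>1 :: "nat \<Rightarrow> real"
    and \<alpha>0 :: "nat \<Rightarrow> real" and repl :: "nat \<Rightarrow> bool" and sf :: "nat \<Rightarrow> real^'n"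
    and \<alpha> :: "nat \<Rightarrow> real" and \<rho>2 :: "nat \<Rightarrow> real"
  assumes psi_def: "\<psi> = (\<lambda>y. f y + \<phi> y)"
  and f_grad: "\<forall>y. GDERIV f y :> gradf y"
    and f_C1: "continuous_on UNIV gradf"
    and phi_convex: "convex_on UNIV \<phi>"
  and gp_def: "gp = (\<lambda>y. u y *\<^sub>R d y)"
  and pseudo_grad: "\<forall>y. (stationary gradf \<phi> y \<longrightarrow> d y = 0 \<and> u y = 0) \<and>
      (\<not> stationary gradf \<phi> y \<longrightarrow> norm (d y) = 1 \<and> dirderiv \<psi> y (d y) < 0 \<and>
          dirderiv \<psi> y (d y) \<le> u y \<and> u y < 0)"
    and safeguard_pos: "\<forall>y v. \<Gamma>s y v > 0"
    and trunc: "truncatable (Gamma_pt \<psi>) S m \<delta> \<kappa> T"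
    and params: "0 < \<eta>" "\<eta> < \<eta>1" "\<eta>1 < \<eta>2" "\<eta>2 < 1" "0 < r1" "r1 < 1" "1 < r2"
      "\<Delta>max > 0" "\<gamma>1 > 0" "\<gamma>2 > 0"
    and eps_seq: "\<forall>j. \<epsilon> j > 0" "\<forall>j. \<epsilon> (Suc j) < \<epsilon> j" "summable \<epsilon>" "\<forall>j. ereal (\<epsilon> j) \<le> \<delta>"
    and ell_prop: "\<forall>a b. 0 < a \<longrightarrow> a \<le> b \<longrightarrow> ell b \<le> ell a" "\<forall>a>0. 0 \<le> ell a \<and> ell a \<le> 1/2"
      "(ell \<longlongrightarrow> 0) (at_right 0)"
    and init: "\<Delta> 0 > 0" "c 0 = (\<lambda>i. 0)"
  and g_def: "g = (\<lambda>k. gp (x k))"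
  and mdl_def: "mdl = (\<lambda>k v. \<psi> (x k) + inner (g k) v + 1/2 * inner v (B k *v v))"
  and sC_def: "sC = (\<lambda>k. - (\<alpha>C k) *\<^sub>R g k)"
  and rho1_def: "\<rho>1 = (\<lambda>k. (\<psi> (x k) - \<psi> (x k + s k)) / (mdl k 0 - mdl k (s k)))"
  and alpha0_def: "\<alpha>0 = (\<lambda>k. real_of_ereal (min (\<Gamma>s (x k) (sgn (s k))) (ereal (norm (s k)))))"
  and repl_def: "repl = (\<lambda>k. mdl k 0 - mdl k (\<alpha>0 k *\<^sub>R sgn (s k))
                      < \<alpha>0 k / (2 * norm (s k)) * (mdl k 0 - mdl k (s k)))"
  and sf_def: "sf = (\<lambda>k. if repl k then sC k else s k)"
  and alpha_def: "\<alpha> = (\<lambda>k. real_of_ereal (min (\<Gamma>s (x k) (sgn (sf k))) (ereal (norm (sf k)))))"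
  and rho2_def: "\<rho>2 = (\<lambda>k. (\<psi> (x k) - \<psi> (x k + \<alpha> k *\<^sub>R sgn (sf k)))
                   / (mdl k 0 - mdl k (\<alpha> k *\<^sub>R sgn (sf k))))"
  and no_stop: "\<forall>k. g k \<noteq> 0"
    and cauchy: "\<forall>k. 0 \<le> \<alpha>C k \<and> \<alpha>C k \<le> \<Delta> k / norm (g k) \<and>
        (\<forall>t. 0 \<le> t \<and> t \<le> \<Delta> k / norm (g k) \<longrightarrow> mdl k (- (\<alpha>C k) *\<^sub>R g k) \<le> mdl k (- t *\<^sub>R g k))"
    and step: "\<forall>k. norm (s k) \<le> \<Delta> k \<and>
        mdl k 0 - mdl k (s k) \<ge> \<gamma>1 / 2 * norm (g k) * min (\<Delta> k) (\<gamma>2 * norm (g k)) \<and>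
        mdl k 0 - mdl k (s k) \<ge> (1 - ell (norm (s k))) * (mdl k 0 - mdl k (sC k))"
    and update: "\<forall>k. (\<rho>1 k \<ge> \<eta>1 \<longrightarrow> xt k = x k + s k \<and>
            \<Delta> (Suc k) = (if \<rho>1 k > \<eta>2 then min \<Delta>max (r2 * \<Delta> k) else \<Delta> k)) \<and>
        (\<rho>1 k < \<eta>1 \<longrightarrow>
            \<Delta> (Suc k) = (if \<rho>2 k < \<eta>1 then r1 * \<Delta> k
                          else if \<rho>2 k > \<eta>2 then min \<Delta>max (r2 * \<Delta> k) else \<Delta> k) \<and>
            xt k = (if \<rho>2 k \<ge> \<eta> then x k + \<alpha> k *\<^sub>R sgn (sf k) else x k))"
    and truncation: "\<forall>k. trunc_run (Gamma_pt \<psi>) S m \<epsilon> T (xt k) (c k) (x (Suc k)) (c (Suc k))"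
    and A1: "bdd_below (range \<psi>)"
    and A2: "\<forall>y. gp y \<noteq> 0 \<longrightarrow> (\<exists>r>0. \<exists>e>0. \<forall>z\<in>ball y r. norm (gp z) \<ge> e)"
    and B1: "\<exists>R>0. \<forall>k. x k \<in> ball 0 R"
    and B2: "\<exists>\<kappa>B>0. \<forall>k. norm (B k) \<le> \<kappa>B"
    and B3: "\<forall>r::nat \<Rightarrow> nat. strict_mono r \<longrightarrow> convergent (x \<circ> r) \<longrightarrow> (\<alpha> \<circ> r) \<longlonglongrightarrow> 0 \<longrightarrow>
        (\<lambda>l. \<psi> (x (r l) + \<alpha> (r l) *\<^sub>R sgn (sf (r l))) - \<psi> (x (r l))
              - \<alpha> (r l) * dirderiv \<psi> (x (r l)) (sgn (sf (r l)))) \<in> o(\<lambda>l. \<alpha> (r l))"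
    and B4: "\<forall>e>0. \<exists>e'>0. \<forall>k. Gamma_pt \<psi> (x k) \<ge> ereal e \<longrightarrow> \<Gamma>s (x k) (sgn (sf k)) \<ge> ereal e'"
    and accum: "\<exists>r::nat \<Rightarrow> nat. strict_mono r \<and> (x \<circ> r) \<longlonglongrightarrow> xstar"
begin

definition pred :: "nat \<Rightarrow> real^'n \<Rightarrow> real" where "pred k v = mdl k 0 - mdl k v"
definition G :: "nat \<Rightarrow> real" where "G k = norm (g k)"
definition dx :: "nat \<Rightarrow> real^'n" where "dx k = d (x k)"
definition Dmax :: real where "Dmax = max (\<Delta> 0) \<Delta>max"

lemma pred_eq: "pred k v = - inner (g k) v - 1/2 * inner v (B k *v v)"
  unfolding pred_def by (simp add: mdl_def)

lemma nonstat: "\<not> stationary gradf \<phi> (x k)"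
  using no_stop pseudo_grad unfolding g_def gp_def by auto

lemma basic: "norm (dx k) = 1" "u (x k) < 0" "G k = - u (x k)" "G k > 0"
  "g k = (- G k) *\<^sub>R dx k" "dirderiv \<psi> (x k) (dx k) \<le> - G k"
proof -
  have ns: "norm (d (x k)) = 1 \<and> dirderiv \<psi> (x k) (d (x k)) \<le> u (x k) \<and> u (x k) < 0"
    using pseudo_grad nonstat[of k] by blast
  then show "norm (dx k) = 1" "u (x k) < 0" unfolding dx_def by auto
  have gk: "g k = u (x k) *\<^sub>R d (x k)" unfolding g_def gp_def by simp
  then show Gk: "G k = - u (x k)" unfolding G_def using ns by simp
  then show "G k > 0" using ns by simp
  show "g k = (- G k) *\<^sub>R dx k" using gk Gk unfolding dx_def by simp
  show "dirderiv \<psi> (x k) (dx k) \<le> - G k" using ns Gk unfolding dx_def by simp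
qed

lemma inner_g: "inner (g k) v = - G k * inner (dx k) v"
  using basic(5)[of k] by simp

lemma KB_ex: "\<exists>KB>0. \<forall>k v. \<bar>inner v (B k *v v)\<bar> \<le> KB * (norm v)\<^sup>2"
proof -
  obtain kB where kB: "kB > 0" "\<forall>k. norm (B k) \<le> kB" using B2 by blast
  define KB where "KB = real CARD('n) * real CARD('n) * kB"
  have KB0: "KB > 0" unfolding KB_def using kB by simp
  have "\<bar>inner v (B k *v v)\<bar> \<le> KB * (norm v)\<^sup>2" for k v
  proof -
    have comp: "\<bar>B k $ i $ j\<bar> \<le> kB" for i j
      using component_le_norm_cart[of "B k $ i" j] Finite_Cartesian_Product.norm_nth_le[of "B k" i] kB(2)[rule_format, of k] by linarith
    have on: "onorm ((*v) (B k)) \<le> KB" unfolding KB_def by (rule onorm_le_matrix_component[OF comp])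
    have "norm (B k *v v) \<le> onorm ((*v) (B k)) * norm v"
      by (rule onorm) simp
    also have "\<dots> \<le> KB * norm v" using on by (intro mult_right_mono) auto
    finally have nb: "norm (B k *v v) \<le> KB * norm v" .
    have "\<bar>inner v (B k *v v)\<bar> \<le> norm v * norm (B k *v v)" by (rule Cauchy_Schwarz_ineq2)
    also have "\<dots> \<le> norm v * (KB * norm v)" using nb by (intro mult_left_mono) auto
    finally show ?thesis by (simp add: power2_eq_square ac_simps)
  qed
  then show ?thesis using KB0 by blast
qed

end



lemma ereal_min_lemma:
  assumes "a > 0" "r > 0"
  shows "real_of_ereal (min a (ereal r)) > 0" "real_of_ereal (min a (ereal r)) \<le> r"
    "a \<ge> ereal e' \<Longrightarrow> e' > 0 \<Longrightarrow> real_of_ereal (min a (ereal r)) \<ge> min e' r"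
  using assms by (cases a; auto simp: min_def)+

context alg begin

lemma Delta_bd: "0 < \<Delta> k \<and> \<Delta> k \<le> Dmax"
proof (induction k)
  case 0 then show ?case using init unfolding Dmax_def by simp
next
  case (Suc k)
  have "Dmax \<ge> \<Delta>max" unfolding Dmax_def by simp
  moreover have "r1 * \<Delta> k \<le> Dmax"
  proof -
    have "r1 * \<Delta> k \<le> \<Delta> k" using params Suc by (intro mult_left_le_one_le) auto
    then show ?thesis using Suc by linarith
  qed
  ultimately show ?case using update[rule_format, of k] Suc params
    by (cases "\<rho>1 k \<ge> \<eta>1"; auto simp: min_def)
qed

lemma Delta_pos: "\<Delta> k > 0" and Delta_le: "\<Delta> k \<le> Dmax"
  using Delta_bd by auto

lemma Dmax_pos: "Dmax > 0" using Delta_pos[of 0] Delta_le[of 0] by simp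

lemma pred_zero: "pred k 0 = 0" unfolding pred_def by simp

lemma pred_dx: "pred k v = G k * inner (dx k) v - 1/2 * inner v (B k *v v)"
  using pred_eq inner_g by simp

definition KB where "KB = (SOME K. K > 0 \<and> (\<forall>k v. \<bar>inner v (B k *v v)\<bar> \<le> K * (norm v)\<^sup>2))"

lemma KB: "KB > 0" "\<bar>inner v (B k *v v)\<bar> \<le> KB * (norm v)\<^sup>2"
proof -
  have "KB > 0 \<and> (\<forall>k v. \<bar>inner v (B k *v v)\<bar> \<le> KB * (norm v)\<^sup>2)"
    unfolding KB_def using someI_ex[OF KB_ex] .
  then show "KB > 0" "\<bar>inner v (B k *v v)\<bar> \<le> KB * (norm v)\<^sup>2" by auto
qed

lemma pred_upper: "pred k v \<le> G k * inner (dx k) v + KB/2 * (norm v)\<^sup>2"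
  using pred_dx[of k v] KB(2)[of v k] by (simp add: abs_le_iff)

lemma pred_upper2: "pred k v \<le> G k * norm v + KB/2 * (norm v)\<^sup>2"
proof -
  have "inner (dx k) v \<le> norm (dx k) * norm v" by (rule norm_cauchy_schwarz)
  then have "G k * inner (dx k) v \<le> G k * norm v" using basic(1,4)[of k] by (intro mult_left_mono) auto
  then show ?thesis using pred_upper[of k v] by simp
qed

lemma pred_tdx: "pred k (t *\<^sub>R dx k) = t * G k - t\<^sup>2 / 2 * inner (dx k) (B k *v dx k)"
  using pred_dx[of k "t *\<^sub>R dx k"] basic(1)[of k]
  by (simp add: matrix_vector_mult_scaleR inner_commute power2_eq_square dot_square_norm algebra_simps)

lemma mdl_tg: "mdl k (- t *\<^sub>R g k) = mdl k 0 - pred k ((t * G k) *\<^sub>R dx k)"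
  unfolding pred_def using basic(5)[of k] by simp

lemma sC_eq: "sC k = (\<alpha>C k * G k) *\<^sub>R dx k"
  unfolding sC_def using basic(5)[of k] by simp

lemma cauchy_min: "0 \<le> \<tau> \<Longrightarrow> \<tau> \<le> \<Delta> k \<Longrightarrow> pred k (sC k) \<ge> pred k (\<tau> *\<^sub>R dx k)"
proof -
  assume t: "0 \<le> \<tau>" "\<tau> \<le> \<Delta> k"
  have G0: "G k > 0" using basic by simp
  have "mdl k (- (\<alpha>C k) *\<^sub>R g k) \<le> mdl k (- (\<tau> / G k) *\<^sub>R g k)"
    using cauchy[rule_format, of k] t G0 unfolding G_def[symmetric] by (auto simp: divide_right_mono)
  then have "mdl k 0 - pred k ((\<alpha>C k * G k) *\<^sub>R dx k) \<le> mdl k 0 - pred k ((\<tau> / G k * G k) *\<^sub>R dx k)"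
    by (simp only: mdl_tg)
  then show ?thesis using G0 by (simp add: sC_eq)
qed

lemma alphaC_pos: "\<alpha>C k > 0"
proof (rule ccontr)
  assume "\<not> \<alpha>C k > 0"
  then have a0: "\<alpha>C k = 0" using cauchy[rule_format, of k] by linarith
  define \<tau> where "\<tau> = min (\<Delta> k) (G k / KB)"
  have G0: "G k > 0" using basic by simp
  have t: "\<tau> > 0" "\<tau> \<le> \<Delta> k" "\<tau> * KB \<le> G k"
    unfolding \<tau>_def using Delta_pos[of k] G0 KB(1) by (auto simp: min_def field_simps)
  have "pred k (\<tau> *\<^sub>R dx k) \<ge> \<tau> * G k - \<tau>\<^sup>2 / 2 * KB"
  proof -
    have "inner (dx k) (B k *v dx k) \<le> KB" using KB(2)[of "dx k" k] basic(1)[of k] by simp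
    then have "\<tau>\<^sup>2 / 2 * inner (dx k) (B k *v dx k) \<le> \<tau>\<^sup>2 / 2 * KB" by (intro mult_left_mono) auto
    then show ?thesis unfolding pred_tdx by simp
  qed
  moreover have "\<tau>\<^sup>2 / 2 * KB \<le> \<tau> * G k / 2"
    using t mult_left_mono[OF t(3), of \<tau>] by (simp add: power2_eq_square algebra_simps)
  moreover have "\<tau> * G k / 2 > 0" using t G0 by simp
  ultimately have "pred k (\<tau> *\<^sub>R dx k) > 0" by linarith
  moreover have "pred k (sC k) = 0" unfolding sC_eq a0 by (simp add: pred_zero)
  ultimately show False using cauchy_min[of \<tau> k] t by simp
qed

lemma sC_props: "sgn (sC k) = dx k" "norm (sC k) = \<alpha>C k * G k" "norm (sC k) \<le> \<Delta> k" "sC k \<noteq> 0"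
proof -
  have p: "\<alpha>C k * G k > 0" using alphaC_pos basic(4) by simp
  have "sgn (dx k) = dx k" using basic(1)[of k] by (simp add: sgn_div_norm)
  then show "sgn (sC k) = dx k" unfolding sC_eq using p by (simp add: sgn_scaleR)
  show n: "norm (sC k) = \<alpha>C k * G k" unfolding sC_eq using p basic(1)[of k] by simp
  have "\<alpha>C k \<le> \<Delta> k / G k" using cauchy unfolding G_def by blast
  then show "norm (sC k) \<le> \<Delta> k" unfolding n using basic(4)[of k] by (simp add: field_simps)
  show "sC k \<noteq> 0" using n p by auto
qed

lemma cauchy_dec:
  assumes "0 \<le> \<tau>" "\<tau> \<le> norm (sC k)"
  shows "pred k (\<tau> *\<^sub>R dx k) \<ge> \<tau> * G k / 2"
proof -
  define b where "b = inner (dx k) (B k *v dx k)"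
  have G0: "G k > 0" using basic by simp
  define a where "a = \<alpha>C k * G k"
  have a: "a = norm (sC k)" "a > 0" "a \<le> \<Delta> k" unfolding a_def using sC_props alphaC_pos[of k] G0 by auto
  have pa: "pred k (sC k) = a * G k - a\<^sup>2/2 * b" unfolding sC_eq pred_tdx b_def a_def ..
  have key: "a * b \<le> G k"
  proof (rule ccontr)
    assume "\<not> a * b \<le> G k"
    then have ab: "a * b > G k" by simp
    then have "a * b > 0" using G0 by linarith
    then have b0: "b > 0" using a(2) by (simp add: zero_less_mult_iff)
    define t0 where "t0 = G k / b"
    have t0: "t0 > 0" "t0 < a" "t0 * b = G k" unfolding t0_def using b0 G0 ab by (auto simp: field_simps)
    have "pred k (t0 *\<^sub>R dx k) = t0 * G k - t0\<^sup>2/2 * b" unfolding pred_tdx b_def ..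
    moreover have "pred k (t0 *\<^sub>R dx k) \<le> pred k (sC k)" using cauchy_min[of t0 k] t0 a by simp
    ultimately have "t0 * G k - t0\<^sup>2/2 * b \<le> a * G k - a\<^sup>2/2 * b" using pa by simp
    moreover have "(t0 * G k - t0\<^sup>2/2 * b) - (a * G k - a\<^sup>2/2 * b) = b/2 * (t0 - a)\<^sup>2"
      using t0(3)[symmetric] by (simp add: power2_eq_square algebra_simps)
    moreover have "b/2 * (t0 - a)\<^sup>2 > 0" using b0 t0 by simp
    ultimately show False by simp
  qed
  have "\<tau> * b \<le> G k"
  proof (cases "b \<ge> 0")
    case True
    then have "\<tau> * b \<le> a * b" using assms a by (intro mult_right_mono) auto
    then show ?thesis using key by simp
  next
    case False
    then have "\<tau> * b \<le> 0" using assms by (simp add: mult_nonneg_nonpos)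
    then show ?thesis using G0 by linarith
  qed
  then have "\<tau>\<^sup>2/2 * b \<le> \<tau> * G k / 2" using assms mult_left_mono[of "\<tau> * b" "G k" \<tau>]
    by (simp add: power2_eq_square algebra_simps)
  then show ?thesis unfolding pred_tdx b_def[symmetric] by simp
qed

end



context alg begin

lemma s_props: "norm (s k) \<le> \<Delta> k" "pred k (s k) \<ge> \<gamma>1 / 2 * G k * min (\<Delta> k) (\<gamma>2 * G k)"
  "pred k (s k) \<ge> (1 - ell (norm (s k))) * pred k (sC k)" "pred k (s k) > 0" "s k \<noteq> 0"
proof -
  show "norm (s k) \<le> \<Delta> k" "pred k (s k) \<ge> \<gamma>1 / 2 * G k * min (\<Delta> k) (\<gamma>2 * G k)"
    "pred k (s k) \<ge> (1 - ell (norm (s k))) * pred k (sC k)"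
    using step[rule_format, of k] unfolding pred_def G_def by auto
  moreover have "\<gamma>1 / 2 * G k * min (\<Delta> k) (\<gamma>2 * G k) > 0"
    using params basic(4)[of k] Delta_pos[of k] by simp
  ultimately show p: "pred k (s k) > 0" by linarith
  then show "s k \<noteq> 0" using pred_zero by auto
qed

lemma min_fac: "min (\<Delta> k) (\<gamma>2 * G k) \<ge> \<Delta> k * min 1 (\<gamma>2 * G k / Dmax)"
proof -
  have D: "0 < \<Delta> k" "\<Delta> k \<le> Dmax" using Delta_bd by auto
  have g: "\<gamma>2 * G k > 0" using params basic(4)[of k] by simp
  have "\<Delta> k * min 1 (\<gamma>2 * G k / Dmax) \<le> \<Delta> k * 1" using D by (intro mult_left_mono) auto
  moreover have "\<Delta> k * min 1 (\<gamma>2 * G k / Dmax) \<le> \<Delta> k * (\<gamma>2 * G k / Dmax)" using D by (intro mult_left_mono) auto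
  moreover have "\<Delta> k * (\<gamma>2 * G k / Dmax) \<le> \<gamma>2 * G k"
  proof -
    have "\<Delta> k * (\<gamma>2 * G k / Dmax) \<le> Dmax * (\<gamma>2 * G k / Dmax)" using D g Dmax_pos by (intro mult_right_mono) auto
    then show ?thesis using Dmax_pos by simp
  qed
  ultimately show ?thesis by simp
qed

lemma sf_cases: "(repl k \<and> sf k = sC k \<and> sgn (sf k) = dx k) \<or> (\<not> repl k \<and> sf k = s k \<and> \<alpha> k = \<alpha>0 k)"
  unfolding sf_def alpha_def alpha0_def using sC_props by auto

lemma sf_props: "sf k \<noteq> 0" "norm (sf k) \<le> \<Delta> k" "\<alpha> k > 0" "\<alpha> k \<le> norm (sf k)" "norm (sgn (sf k)) = 1"
proof -
  show sf0: "sf k \<noteq> 0" "norm (sf k) \<le> \<Delta> k" using sf_cases[of k] sC_props s_props by auto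
  then show "norm (sgn (sf k)) = 1" by (simp add: norm_sgn)
  have "\<Gamma>s (x k) (sgn (sf k)) > 0" using safeguard_pos by blast
  then show "\<alpha> k > 0" "\<alpha> k \<le> norm (sf k)" unfolding alpha_def using ereal_min_lemma sf0 by auto
qed

definition cg :: "real \<Rightarrow> real" where
  "cg t = min (t / 2) (\<gamma>1 / 4 * t * min 1 (\<gamma>2 * t / Dmax))"
definition cm :: "real \<Rightarrow> real" where
  "cm t = min (cg t) (\<gamma>1 / 2 * t * min 1 (\<gamma>2 * t / Dmax))"

lemma cg_cm_mono: "0 < e \<Longrightarrow> e \<le> t \<Longrightarrow> cg e \<le> cg t \<and> cm e \<le> cm t \<and> 0 < cg e \<and> 0 < cm e"
proof -
  assume e: "0 < e" "e \<le> t"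
  have Dp: "Dmax > 0" by (rule Dmax_pos)
  have "\<gamma>2 * e \<le> \<gamma>2 * t" using e params by (intro mult_left_mono) auto
  then have "\<gamma>2 * e / Dmax \<le> \<gamma>2 * t / Dmax" using Dp by (intro divide_right_mono) auto
  then have m: "min 1 (\<gamma>2 * e / Dmax) \<le> min 1 (\<gamma>2 * t / Dmax)" by (rule min.mono[OF order_refl])
  have mp: "min 1 (\<gamma>2 * e / Dmax) > 0" using e params Dp by simp
  have a: "\<gamma>1 / 4 * e * min 1 (\<gamma>2 * e / Dmax) \<le> \<gamma>1 / 4 * t * min 1 (\<gamma>2 * t / Dmax)"
    using e m mp params by (intro mult_mono) auto
  have b: "\<gamma>1 / 2 * e * min 1 (\<gamma>2 * e / Dmax) \<le> \<gamma>1 / 2 * t * min 1 (\<gamma>2 * t / Dmax)"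
    using e m mp params by (intro mult_mono) auto
  have "cg e \<le> cg t" unfolding cg_def by (rule min.mono) (use a e in auto)
  moreover have "0 < cg e" unfolding cg_def using e mp params by simp
  moreover have "0 < cm e" unfolding cm_def using e mp params calculation by simp
  moreover have "cm e \<le> cm t" unfolding cm_def by (rule min.mono) (use b calculation in auto)
  ultimately show ?thesis by simp
qed

lemma pred_alpha: "pred k (\<alpha> k *\<^sub>R sgn (sf k)) \<ge> \<alpha> k * cg (G k)"
proof -
  have G0: "G k > 0" using basic by simp
  have al: "\<alpha> k > 0" "\<alpha> k \<le> norm (sf k)" using sf_props by auto
  show ?thesis
  proof (cases "repl k")
    case True
    then have e: "sf k = sC k" "sgn (sf k) = dx k" using sf_cases[of k] by auto
    have "pred k (\<alpha> k *\<^sub>R sgn (sf k)) \<ge> \<alpha> k * G k / 2"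
      unfolding e(2) using al e(1) by (intro cauchy_dec) auto
    moreover have "\<alpha> k * cg (G k) \<le> \<alpha> k * (G k / 2)" using al unfolding cg_def by (intro mult_left_mono) auto
    ultimately show ?thesis by simp
  next
    case False
    then have e: "sf k = s k" "\<alpha> k = \<alpha>0 k" using sf_cases[of k] by auto
    have ns: "norm (s k) > 0" using s_props by simp
    have "pred k (\<alpha>0 k *\<^sub>R sgn (s k)) \<ge> \<alpha>0 k / (2 * norm (s k)) * pred k (s k)"
      using False unfolding repl_def pred_def by simp
    also have "\<alpha>0 k / (2 * norm (s k)) * pred k (s k) \<ge> \<alpha>0 k / (2 * norm (s k)) * (\<gamma>1 / 2 * G k * (\<Delta> k * min 1 (\<gamma>2 * G k / Dmax)))"
    proof -
      have "pred k (s k) \<ge> \<gamma>1 / 2 * G k * (\<Delta> k * min 1 (\<gamma>2 * G k / Dmax))"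
      proof -
        have "\<gamma>1 / 2 * G k * (\<Delta> k * min 1 (\<gamma>2 * G k / Dmax)) \<le> \<gamma>1 / 2 * G k * min (\<Delta> k) (\<gamma>2 * G k)"
          using min_fac[of k] params G0 by (intro mult_left_mono) auto
        then show ?thesis using s_props(2)[of k] by linarith
      qed
      then show ?thesis using al e ns by (intro mult_left_mono) auto
    qed
    also have "\<alpha>0 k / (2 * norm (s k)) * (\<gamma>1 / 2 * G k * (\<Delta> k * min 1 (\<gamma>2 * G k / Dmax)))
        = \<alpha>0 k * (\<gamma>1 / 4 * G k * min 1 (\<gamma>2 * G k / Dmax)) * (\<Delta> k / norm (s k))"
      using ns by (simp add: field_simps)
    also have "\<dots> \<ge> \<alpha>0 k * (\<gamma>1 / 4 * G k * min 1 (\<gamma>2 * G k / Dmax)) * 1"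
    proof -
      have "\<Delta> k / norm (s k) \<ge> 1" using ns s_props(1)[of k] by simp
      moreover have "\<alpha>0 k * (\<gamma>1 / 4 * G k * min 1 (\<gamma>2 * G k / Dmax)) \<ge> 0"
        using al e params G0 Dmax_pos by simp
      ultimately show ?thesis by (intro mult_left_mono) auto
    qed
    also have "\<alpha>0 k * (\<gamma>1 / 4 * G k * min 1 (\<gamma>2 * G k / Dmax)) * 1 \<ge> \<alpha>0 k * cg (G k)"
    proof -
      have "cg (G k) \<le> \<gamma>1 / 4 * G k * min 1 (\<gamma>2 * G k / Dmax)" unfolding cg_def by (rule min.cobounded2)
      then show ?thesis using al e by (simp add: mult_left_mono)
    qed
    finally show ?thesis using e by simp
  qed
qed

lemma pred_alpha_pos: "pred k (\<alpha> k *\<^sub>R sgn (sf k)) > 0"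
proof -
  have "\<alpha> k * cg (G k) > 0" using sf_props(3)[of k] cg_cm_mono[of "G k" "G k"] basic(4)[of k] by simp
  then show ?thesis using pred_alpha[of k] by linarith
qed

definition dec :: "nat \<Rightarrow> real" where "dec k = \<psi> (x k) - \<psi> (xt k)"

lemma dec_rho1:
  assumes "\<rho>1 k \<ge> \<eta>1"
  shows "xt k = x k + s k" "dec k \<ge> \<eta>1 * pred k (s k)"
proof -
  show xe: "xt k = x k + s k" using update[rule_format, of k] assms by auto
  have p: "pred k (s k) > 0" using s_props by simp
  have "\<psi> (x k) - \<psi> (x k + s k) = \<rho>1 k * pred k (s k)"
    using p unfolding rho1_def pred_def by simp
  then show "dec k \<ge> \<eta>1 * pred k (s k)" unfolding dec_def xe using assms p by (simp add: mult_right_mono)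
qed

lemma dec_rho2:
  assumes "\<rho>1 k < \<eta>1" "\<rho>2 k \<ge> \<eta>"
  shows "xt k = x k + \<alpha> k *\<^sub>R sgn (sf k)" "dec k \<ge> \<eta> * (\<alpha> k * cg (G k))"
proof -
  show xe: "xt k = x k + \<alpha> k *\<^sub>R sgn (sf k)" using update[rule_format, of k] assms by auto
  have p: "pred k (\<alpha> k *\<^sub>R sgn (sf k)) > 0" by (rule pred_alpha_pos)
  have "\<psi> (x k) - \<psi> (x k + \<alpha> k *\<^sub>R sgn (sf k)) = \<rho>2 k * pred k (\<alpha> k *\<^sub>R sgn (sf k))"
    using p unfolding rho2_def pred_def by simp
  also have "\<dots> \<ge> \<eta> * pred k (\<alpha> k *\<^sub>R sgn (sf k))" using assms p by (simp add: mult_right_mono)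
  also have "\<eta> * pred k (\<alpha> k *\<^sub>R sgn (sf k)) \<ge> \<eta> * (\<alpha> k * cg (G k))"
    using pred_alpha params by (simp add: mult_left_mono)
  finally show "dec k \<ge> \<eta> * (\<alpha> k * cg (G k))" unfolding dec_def xe by simp
qed

lemma dec_rej:
  assumes "\<rho>1 k < \<eta>1" "\<rho>2 k < \<eta>"
  shows "xt k = x k" "\<Delta> (Suc k) = r1 * \<Delta> k" "dec k = 0"
  using update[rule_format, of k] assms params unfolding dec_def by auto

lemma dec_nonneg: "dec k \<ge> 0"
proof -
  have G0: "G k > 0" using basic by simp
  have c: "cg (G k) > 0" using cg_cm_mono[of "G k" "G k"] G0 by simp
  show ?thesis
  proof (cases "\<rho>1 k \<ge> \<eta>1")
    case True
    have "\<eta>1 * pred k (s k) > 0" using s_props(4)[of k] params by simp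
    then show ?thesis using dec_rho1[OF True] by linarith
  next
    case False
    show ?thesis
    proof (cases "\<rho>2 k \<ge> \<eta>")
      case True
      have "\<eta> * (\<alpha> k * cg (G k)) > 0" using sf_props(3)[of k] c params by simp
      then show ?thesis using dec_rho2[of k] False True by linarith
    next
      case F2: False then show ?thesis using dec_rej[of k] False by simp
    qed
  qed
qed

lemma dec_move: "dec k \<ge> \<eta> * cm (G k) * norm (xt k - x k)"
proof -
  have G0: "G k > 0" using basic by simp
  have cc: "cm (G k) > 0" "cm (G k) \<le> cg (G k)" "cm (G k) \<le> \<gamma>1 / 2 * G k * min 1 (\<gamma>2 * G k / Dmax)"
    using cg_cm_mono[of "G k" "G k"] G0 apply simp
    unfolding cm_def by (rule min.cobounded1, rule min.cobounded2)
  show ?thesis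
  proof (cases "\<rho>1 k \<ge> \<eta>1")
    case True
    note D = dec_rho1[OF True]
    have "\<eta> * cm (G k) * norm (s k) \<le> \<eta>1 * (\<gamma>1 / 2 * G k * min 1 (\<gamma>2 * G k / Dmax) * \<Delta> k)"
    proof -
      have "cm (G k) * norm (s k) \<le> (\<gamma>1 / 2 * G k * min 1 (\<gamma>2 * G k / Dmax)) * \<Delta> k"
        using cc s_props(1)[of k] by (intro mult_mono) auto
      then have "\<eta>1 * (cm (G k) * norm (s k)) \<le> \<eta>1 * ((\<gamma>1 / 2 * G k * min 1 (\<gamma>2 * G k / Dmax)) * \<Delta> k)"
        using params by (intro mult_left_mono) auto
      moreover have "\<eta> * (cm (G k) * norm (s k)) \<le> \<eta>1 * (cm (G k) * norm (s k))"
        using params cc by (intro mult_right_mono) auto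
      ultimately show ?thesis by (simp add: mult.assoc)
    qed
    also have "\<dots> \<le> \<eta>1 * pred k (s k)"
    proof -
      have "\<gamma>1 / 2 * G k * min 1 (\<gamma>2 * G k / Dmax) * \<Delta> k = \<gamma>1 / 2 * G k * (\<Delta> k * min 1 (\<gamma>2 * G k / Dmax))"
        by simp
      also have "\<dots> \<le> \<gamma>1 / 2 * G k * min (\<Delta> k) (\<gamma>2 * G k)"
        using min_fac[of k] params G0 by (intro mult_left_mono) auto
      also have "\<dots> \<le> pred k (s k)" using s_props by simp
      finally show ?thesis using params by (intro mult_left_mono) auto
    qed
    finally show ?thesis using D by simp
  next
    case False
    show ?thesis
    proof (cases "\<rho>2 k \<ge> \<eta>")
      case True
      note D = dec_rho2[OF _ True]
      have "norm (xt k - x k) = \<alpha> k" using D False sf_props(3,5)[of k] by simp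
      moreover have "\<eta> * cm (G k) * \<alpha> k \<le> \<eta> * (\<alpha> k * cg (G k))"
        using cc params sf_props(3)[of k] by (simp add: mult_left_mono mult.commute)
      ultimately show ?thesis using D False by simp
    next
      case F2: False then show ?thesis using dec_rej[of k] False by simp
    qed
  qed
qed

end



lemma conv_lemma:
  fixes x :: "nat \<Rightarrow> 'a::real_normed_vector"
  assumes w: "summable w" "\<And>k. w k \<ge> 0"
    and step: "\<And>k. x k \<in> ball a r \<Longrightarrow> norm (x (Suc k) - x k) \<le> w k"
    and r: "r > 0"
    and sub: "\<And>e N. e > 0 \<Longrightarrow> \<exists>k\<ge>N. dist (x k) a < e"
  shows "x \<longlonglongrightarrow> a"
proof (rule metric_LIMSEQ_I)
  fix e0 :: real assume "e0 > 0"
  define e where "e = min e0 r"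
  have e: "e > 0" "e \<le> r" "e \<le> e0" unfolding e_def using \<open>e0 > 0\<close> r by auto
  obtain N0 where N0: "\<And>n. n \<ge> N0 \<Longrightarrow> norm (\<Sum>i. w (i + n)) < e/2"
    using suminf_exist_split[of "e/2" w] e w by auto
  obtain N where N: "N \<ge> N0" "dist (x N) a < e/2" using sub[of "e/2" N0] e by auto
  have tail: "(\<Sum>j\<in>{N..<k}. w j) < e/2" if "k \<ge> N" for k
  proof -
    have "(\<Sum>j\<in>{N..<k}. w j) = (\<Sum>i<k-N. w (i + N))"
      using that by (intro sum.reindex_bij_witness[of _ "\<lambda>i. i + N" "\<lambda>j. j - N"]) auto
    also have "\<dots> \<le> (\<Sum>i. w (i + N))"
      using w by (intro sum_le_suminf) auto
    also have "\<dots> < e/2" using N0[of N] N(1) w by (simp add: suminf_nonneg)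
    finally show ?thesis .
  qed
  have main: "norm (x k - x N) \<le> (\<Sum>j\<in>{N..<k}. w j)" if "k \<ge> N" for k
    using that
  proof (induction k rule: dec_induct)
    case base then show ?case by simp
  next
    case (step k)
    have "dist (x k) a \<le> norm (x k - x N) + dist (x N) a"
      by (metis dist_norm dist_triangle)
    also have "\<dots> < e/2 + e/2" using step tail[of k] N by linarith
    finally have "x k \<in> ball a r" using e by (simp add: dist_commute)
    then have "norm (x (Suc k) - x k) \<le> w k" by (rule assms(3))
    moreover have "norm (x (Suc k) - x N) \<le> norm (x (Suc k) - x k) + norm (x k - x N)"
      using norm_triangle_ineq[of "x (Suc k) - x k" "x k - x N"] by simp
    ultimately show ?case using step by (simp add: sum.atLeastLessThan_Suc)
  qed
  show "\<exists>no. \<forall>n\<ge>no. dist (x n) a < e0"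
  proof (intro exI allI impI)
    fix n assume "n \<ge> N"
    have "dist (x n) a \<le> norm (x n - x N) + dist (x N) a"
      by (metis dist_norm dist_triangle)
    also have "\<dots> < e/2 + e/2" using main[OF \<open>n \<ge> N\<close>] tail[OF \<open>n \<ge> N\<close>] N by linarith
    finally show "dist (x n) a < e0" using e by simp
  qed
qed

context alg begin

definition R0 where "R0 = (SOME R. R > 0 \<and> (\<forall>k. x k \<in> ball 0 R))"

lemma R0: "R0 > 0" "norm (x k) < R0"
proof -
  have "R0 > 0 \<and> (\<forall>k. x k \<in> ball 0 R0)" unfolding R0_def using someI_ex[OF B1] .
  then show "R0 > 0" "norm (x k) < R0" by auto
qed

definition rho0 where "rho0 = R0 + Dmax + 1"

definition L0 where "L0 = (SOME L. L > 0 \<and> (\<forall>a b. norm a \<le> rho0 \<longrightarrow> norm b \<le> rho0 \<longrightarrow> \<bar>\<psi> b - \<psi> a\<bar> \<le> L * norm (b - a)))"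

lemma L0: "L0 > 0" "\<forall>a b. norm a \<le> rho0 \<longrightarrow> norm b \<le> rho0 \<longrightarrow> \<bar>\<psi> b - \<psi> a\<bar> \<le> L0 * norm (b - a)"
proof -
  have "\<exists>L>0. \<forall>a b. norm a \<le> rho0 \<longrightarrow> norm b \<le> rho0 \<longrightarrow> \<bar>\<psi> b - \<psi> a\<bar> \<le> L * norm (b - a)"
    using psi_lip[OF f_grad f_C1 phi_convex, of rho0] unfolding psi_def by simp
  from someI_ex[OF this] show "L0 > 0" "\<forall>a b. norm a \<le> rho0 \<longrightarrow> norm b \<le> rho0 \<longrightarrow> \<bar>\<psi> b - \<psi> a\<bar> \<le> L0 * norm (b - a)"
    unfolding L0_def by auto
qed

lemma dd_tendsto: "((\<lambda>t. (\<psi> (y + t *\<^sub>R v) - \<psi> y) / t) \<longlongrightarrow> dirderiv \<psi> y v) (at_right 0)"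
  by (rule dirderiv_tendsto[OF f_grad phi_convex psi_def])

lemma dd_lip: "norm y < rho0 \<Longrightarrow> \<bar>dirderiv \<psi> y v - dirderiv \<psi> y w\<bar> \<le> L0 * norm (v - w)"
  by (rule dirderiv_lip[OF dd_tendsto L0(2)])

lemma dd_zero: "dirderiv \<psi> y 0 = 0"
proof -
  have "((\<lambda>t. (\<psi> (y + t *\<^sub>R 0) - \<psi> y) / t) \<longlongrightarrow> 0) (at_right 0)" by simp
  then show ?thesis using dd_tendsto[of y 0] tendsto_unique[of "at_right (0::real)"] by auto
qed

lemma xk_rho: "norm (x k) < rho0" using R0(2)[of k] Dmax_pos unfolding rho0_def by simp

lemma G_le: "G k \<le> L0"
proof -
  have "\<bar>dirderiv \<psi> (x k) (dx k) - dirderiv \<psi> (x k) 0\<bar> \<le> L0 * norm (dx k - 0)"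
    using dd_lip[OF xk_rho] .
  then have "\<bar>dirderiv \<psi> (x k) (dx k)\<bar> \<le> L0" using basic(1)[of k] dd_zero by simp
  then show ?thesis using basic(6)[of k] by simp
qed

lemma xt_move: "norm (xt k - x k) \<le> \<Delta> k"
proof (cases "\<rho>1 k \<ge> \<eta>1")
  case True then show ?thesis using dec_rho1[OF True] s_props(1) by simp
next
  case False
  show ?thesis
  proof (cases "\<rho>2 k \<ge> \<eta>")
    case True
    then show ?thesis using dec_rho2[of k] False sf_props[of k] by simp
  next
    case F2: False then show ?thesis using dec_rej[of k] False Delta_pos[of k] by simp
  qed
qed

lemma xt_rho: "norm (xt k) \<le> rho0"
proof -
  have "norm (xt k) \<le> norm (x k) + norm (xt k - x k)"
    using norm_triangle_ineq[of "x k" "xt k - x k"] by simp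
  then show ?thesis using R0(2)[of k] xt_move[of k] Delta_le[of k] unfolding rho0_def by simp
qed

definition P :: "nat \<Rightarrow> real" where "P k = Pc m \<epsilon> (c k)"

lemma TR: "(\<forall>j. c k j \<le> c (Suc k) j) \<and> level S m (xt k) \<le> level S m (x (Suc k))
    \<and> (\<forall>j. c k j < c (Suc k) j \<longrightarrow> j < level S m (x (Suc k)))
    \<and> Gamma_pt \<psi> (x (Suc k)) \<ge> ereal (\<epsilon> (c (Suc k) (level S m (x (Suc k)))))
    \<and> norm (x (Suc k) - xt k) \<le> \<kappa> * (P (Suc k) - P k)"
  unfolding P_def by (rule trunc_run_props[OF trunc eps_seq(1) eps_seq(4) truncation[rule_format]])

lemma kappa_pos: "\<kappa> > 0" using trunc unfolding truncatable_def by simp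

lemma P_mono: "P k \<le> P (Suc k)"
proof -
  have "0 \<le> \<kappa> * (P (Suc k) - P k)" using TR[of k] by (meson norm_ge_zero order_trans)
  then show ?thesis using kappa_pos by (simp add: zero_le_mult_iff)
qed

lemma P_bd: "0 \<le> P k" "P k \<le> real (Suc m) * suminf \<epsilon>"
proof -
  have e0: "\<And>l. 0 \<le> \<epsilon> l" using eps_seq(1) less_imp_le by blast
  have a: "(\<Sum>l<c k j. \<epsilon> l) \<le> suminf \<epsilon>" for j
    using e0 by (intro sum_le_suminf eps_seq(3)) auto
  have "P k \<le> (\<Sum>j\<le>m. suminf \<epsilon>)" unfolding P_def Pc_def by (intro sum_mono a)
  then show "P k \<le> real (Suc m) * suminf \<epsilon>" by simp
  show "0 \<le> P k" unfolding P_def Pc_def using e0 by (intro sum_nonneg) auto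
qed

definition Phi :: "nat \<Rightarrow> real" where "Phi k = \<psi> (x k) - L0 * \<kappa> * P k"

lemma Phi_step: "Phi (Suc k) \<le> Phi k - dec k"
proof -
  have "\<bar>\<psi> (x (Suc k)) - \<psi> (xt k)\<bar> \<le> L0 * norm (x (Suc k) - xt k)"
    using L0(2) xt_rho[of k] xk_rho[of "Suc k"] less_imp_le by blast
  then have "\<psi> (x (Suc k)) - \<psi> (xt k) \<le> L0 * norm (x (Suc k) - xt k)" by simp
  also have "\<dots> \<le> L0 * (\<kappa> * (P (Suc k) - P k))" using TR[of k] L0(1) by (intro mult_left_mono) auto
  finally show ?thesis unfolding Phi_def dec_def by (simp add: algebra_simps)
qed

lemma dec_summable: "summable dec"
proof -
  obtain lb where lb: "\<And>y. \<psi> y \<ge> lb" using A1 unfolding bdd_below_def by auto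
  define lb' where "lb' = lb - L0 * \<kappa> * (real (Suc m) * suminf \<epsilon>)"
  have Pl: "Phi k \<ge> lb'" for k
  proof -
    have "L0 * \<kappa> * P k \<le> L0 * \<kappa> * (real (Suc m) * suminf \<epsilon>)" using P_bd(2)[of k] L0(1) kappa_pos by simp
    then show ?thesis unfolding Phi_def lb'_def using lb[of "x k"] by linarith
  qed
  have "(\<Sum>i<n. dec i) \<le> Phi 0 - Phi n" for n
  proof (induction n)
    case 0 then show ?case by simp
  next
    case (Suc n) then show ?case using Phi_step[of n] by simp
  qed
  then have "(\<Sum>i<n. dec i) \<le> Phi 0 - lb'" for n using Pl[of n] by (smt (verit))
  then show ?thesis using dec_nonneg by (intro summableI_nonneg_bounded) auto
qed

lemma dP_summable: "summable (\<lambda>k. P (Suc k) - P k)"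
proof -
  have "(\<Sum>i<n. P (Suc i) - P i) = P n - P 0" for n by (induction n) auto
  then have "(\<Sum>i<n. P (Suc i) - P i) \<le> real (Suc m) * suminf \<epsilon>" for n
    using P_bd[of n] P_bd[of 0] by simp
  then show ?thesis using P_mono by (intro summableI_nonneg_bounded) auto
qed

end



locale alg_nst = alg +
  assumes nst: "\<not> stationary gradf \<phi> xstar"
begin

lemma gp_star: "gp xstar \<noteq> 0"
proof -
  have "norm (d xstar) = 1 \<and> u xstar < 0" using pseudo_grad nst by blast
  then show ?thesis unfolding gp_def by auto
qed

definition rr where "rr = (SOME r. r > 0 \<and> (\<exists>e>0. \<forall>z\<in>ball xstar r. norm (gp z) \<ge> e))"
definition ee where "ee = (SOME e. e > 0 \<and> (\<forall>z\<in>ball xstar rr. norm (gp z) \<ge> e))"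

lemma rr_ee: "rr > 0" "ee > 0" "\<And>z. z \<in> ball xstar rr \<Longrightarrow> norm (gp z) \<ge> ee"
proof -
  have "\<exists>r>0. \<exists>e>0. \<forall>z\<in>ball xstar r. norm (gp z) \<ge> e" using A2 gp_star by blast
  then have r: "rr > 0 \<and> (\<exists>e>0. \<forall>z\<in>ball xstar rr. norm (gp z) \<ge> e)"
    unfolding rr_def by (rule someI_ex)
  then have "ee > 0 \<and> (\<forall>z\<in>ball xstar rr. norm (gp z) \<ge> ee)"
    unfolding ee_def by (intro someI_ex[of "\<lambda>e. e > 0 \<and> (\<forall>z\<in>ball xstar rr. norm (gp z) \<ge> e)"]) blast
  then show "rr > 0" "ee > 0" "\<And>z. z \<in> ball xstar rr \<Longrightarrow> norm (gp z) \<ge> ee" using r by auto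
qed

lemma G_ge: "x k \<in> ball xstar rr \<Longrightarrow> G k \<ge> ee"
  using rr_ee(3) unfolding G_def by (simp add: g_def)

lemma x_conv: "x \<longlonglongrightarrow> xstar"
proof -
  have cme: "cm ee > 0" using cg_cm_mono[of ee ee] rr_ee by simp
  define w where "w k = dec k / (\<eta> * cm ee) + \<kappa> * (P (Suc k) - P k)" for k
  have ws: "summable w" unfolding w_def
    by (intro summable_add summable_divide summable_mult dec_summable dP_summable)
  have w0: "w k \<ge> 0" for k
    unfolding w_def using dec_nonneg[of k] P_mono[of k] kappa_pos cme params by simp
  have step: "norm (x (Suc k) - x k) \<le> w k" if "x k \<in> ball xstar rr" for k
  proof -
    have Ge: "G k \<ge> ee" using G_ge that .
    have cmG: "cm (G k) \<ge> cm ee" using cg_cm_mono[OF rr_ee(2) Ge] by simp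
    have pos: "\<eta> * cm (G k) > 0" using cme cmG params by simp
    have "\<eta> * cm (G k) * norm (xt k - x k) \<le> dec k" by (rule dec_move)
    then have "norm (xt k - x k) \<le> dec k / (\<eta> * cm (G k))"
      using pos by (simp add: field_simps)
    also have "\<dots> \<le> dec k / (\<eta> * cm ee)"
      using dec_nonneg[of k] cmG cme params by (intro divide_left_mono mult_left_mono) auto
    finally have a: "norm (xt k - x k) \<le> dec k / (\<eta> * cm ee)" .
    have "norm (x (Suc k) - x k) \<le> norm (x (Suc k) - xt k) + norm (xt k - x k)"
      using norm_triangle_ineq[of "x (Suc k) - xt k" "xt k - x k"] by simp
    then show ?thesis using a TR[of k] unfolding w_def by linarith
  qed
  obtain r where r: "strict_mono r" "(x \<circ> r) \<longlonglongrightarrow> xstar" using accum by blast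
  have sub: "\<exists>k\<ge>N. dist (x k) xstar < e" if epos: "e > 0" for e N
  proof -
    obtain n0 where n0: "\<forall>n\<ge>n0. dist ((x \<circ> r) n) xstar < e"
      using metric_LIMSEQ_D[OF r(2) epos] by blast
    define n where "n = max n0 N"
    have "r n \<ge> N" using seq_suble[OF r(1), of n] unfolding n_def by simp
    moreover have "dist (x (r n)) xstar < e" using n0 unfolding n_def by simp
    ultimately show ?thesis by blast
  qed
  show ?thesis by (rule conv_lemma[OF ws w0 step rr_ee(1) sub])
qed

definition K0 where "K0 = (SOME K. \<forall>k\<ge>K. x k \<in> ball xstar rr)"

lemma K0: "k \<ge> K0 \<Longrightarrow> x k \<in> ball xstar rr"
proof -
  have "\<exists>K. \<forall>k\<ge>K. dist (x k) xstar < rr" using metric_LIMSEQ_D[OF x_conv rr_ee(1)] by blast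
  then have "\<exists>K. \<forall>k\<ge>K. x k \<in> ball xstar rr" by (simp add: dist_commute)
  from someI_ex[OF this] show "k \<ge> K0 \<Longrightarrow> x k \<in> ball xstar rr" unfolding K0_def by blast
qed

lemma GK0: "k \<ge> K0 \<Longrightarrow> G k \<ge> ee" using G_ge K0 by blast

lemma dir_bound:
  assumes Ge: "G k \<ge> ee" and nr: "\<not> repl k"
    and small: "ell (norm (s k)) + 2 * (\<Delta> k * KB / (2 * ee)) \<le> 1"
  shows "(norm (sgn (sf k) - dx k))\<^sup>2 \<le> 2 * (ell (norm (s k)) + 2 * (\<Delta> k * KB / (2 * ee)))"
proof -
  define l where "l = ell (norm (s k))"
  define q where "q = \<Delta> k * KB / (2 * ee)"
  define D where "D = \<Delta> k"
  have sf: "sf k = s k" using sf_cases[of k] nr by auto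
  have ns: "norm (s k) > 0" "norm (s k) \<le> D" using s_props[of k] unfolding D_def by auto
  have l: "0 \<le> l" "l \<le> 1/2" using ell_prop(2) ns unfolding l_def by auto
  have G0: "G k > 0" using basic by simp
  have D0: "D > 0" unfolding D_def using Delta_pos by simp
  have ee0: "ee > 0" using rr_ee by simp
  have q0: "q \<ge> 0" unfolding q_def D_def using Delta_pos[of k] KB(1) ee0 by simp
  have b: "inner (dx k) (B k *v dx k) \<le> KB" using KB(2)[of "dx k" k] basic(1)[of k] by simp
  have pC: "pred k (sC k) \<ge> D * G k - D\<^sup>2/2 * KB"
  proof -
    have "pred k (sC k) \<ge> pred k (D *\<^sub>R dx k)" using cauchy_min[of D k] D0 unfolding D_def by simp
    moreover have "D\<^sup>2/2 * inner (dx k) (B k *v dx k) \<le> D\<^sup>2/2 * KB" using b by (intro mult_left_mono) auto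
    ultimately show ?thesis unfolding pred_tdx by simp
  qed
  have pS: "pred k (s k) \<ge> (1 - l) * (D * G k - D\<^sup>2/2 * KB)"
  proof -
    have "(1 - l) * (D * G k - D\<^sup>2/2 * KB) \<le> (1 - l) * pred k (sC k)"
      using pC l by (intro mult_left_mono) auto
    then show ?thesis using s_props(3)[of k] unfolding l_def by linarith
  qed
  have pU: "pred k (s k) \<le> G k * inner (dx k) (s k) + KB/2 * D\<^sup>2"
  proof -
    have "(norm (s k))\<^sup>2 \<le> D\<^sup>2" using ns by (intro power_mono) auto
    then have "KB/2 * (norm (s k))\<^sup>2 \<le> KB/2 * D\<^sup>2" using KB(1) by (intro mult_left_mono) auto
    then show ?thesis using pred_upper[of k "s k"] by linarith
  qed
  define X where "X = (1 - l) * (1 - q) - q"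
  have Gq: "G k * q \<ge> D * KB / 2"
  proof -
    have "G k * q = (G k / ee) * (D * KB / 2)" unfolding q_def D_def by (simp add: field_simps)
    moreover have "G k / ee \<ge> 1" using Ge ee0 by simp
    moreover have "D * KB / 2 \<ge> 0" using D0 KB(1) by simp
    ultimately have "1 * (D * KB / 2) \<le> (G k / ee) * (D * KB / 2)" by (intro mult_right_mono) auto
    then show ?thesis using \<open>G k * q = (G k / ee) * (D * KB / 2)\<close> by simp
  qed
  have "G k * (D * X) = (1 - l) * (D * G k - D * (G k * q)) - D * (G k * q)"
    unfolding X_def by (simp add: algebra_simps)
  also have "\<dots> \<le> (1 - l) * (D * G k - D\<^sup>2/2 * KB) - KB/2 * D\<^sup>2"
  proof -
    have h: "D * (G k * q) \<ge> D\<^sup>2/2 * KB"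
      using mult_left_mono[OF Gq, of D] D0 by (simp add: power2_eq_square algebra_simps)
    then have "(1 - l) * (D * G k - D * (G k * q)) \<le> (1 - l) * (D * G k - D\<^sup>2/2 * KB)"
      using l by (intro mult_left_mono) auto
    then show ?thesis using h by (simp add: algebra_simps)
  qed
  also have "\<dots> \<le> G k * inner (dx k) (s k)" using pS pU by linarith
  finally have "G k * (D * X) \<le> G k * inner (dx k) (s k)" .
  then have iX: "D * X \<le> inner (dx k) (s k)" using G0 by simp
  have X0: "X \<ge> 1 - l - 2 * q"
  proof -
    have "l * q \<ge> 0" using l q0 by simp
    then show ?thesis unfolding X_def by (simp add: algebra_simps)
  qed
  then have Xn: "X \<ge> 0" using small unfolding l_def q_def by linarith
  have "norm (s k) * X \<le> D * X" using ns Xn by (intro mult_right_mono) auto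
  then have "norm (s k) * X \<le> inner (dx k) (s k)" using iX by linarith
  then have iS: "X \<le> inner (dx k) (sgn (s k))"
    using ns by (simp add: sgn_div_norm field_simps)
  have "(norm (sgn (s k) - dx k))\<^sup>2 = (norm (sgn (s k)))\<^sup>2 - 2 * inner (dx k) (sgn (s k)) + (norm (dx k))\<^sup>2"
    by (simp add: power2_norm_eq_inner inner_diff_left inner_diff_right inner_commute)
  also have "\<dots> = 2 - 2 * inner (dx k) (sgn (s k))"
    using ns basic(1)[of k] by (simp add: norm_sgn)
  also have "\<dots> \<le> 2 - 2 * X" using iS by simp
  also have "\<dots> \<le> 2 * (l + 2 * q)" using X0 by simp
  finally show ?thesis unfolding sf l_def q_def D_def .
qed

definition E :: "nat \<Rightarrow> real" where
  "E k = \<psi> (x k + \<alpha> k *\<^sub>R sgn (sf k)) - \<psi> (x k) - \<alpha> k * dirderiv \<psi> (x k) (sgn (sf k))"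

lemma rho2_big:
  assumes Ge: "G k \<ge> ee"
    and cond: "(1 - \<eta>1) * ee > L0 * norm (sgn (sf k) - dx k) + \<bar>E k\<bar> / \<alpha> k + \<eta>1 * \<alpha> k * KB / 2"
  shows "\<rho>2 k > \<eta>1"
proof -
  define a where "a = \<alpha> k"
  define v where "v = sgn (sf k)"
  have a0: "a > 0" unfolding a_def using sf_props by simp
  have nv: "norm v = 1" unfolding v_def using sf_props by simp
  have dd: "dirderiv \<psi> (x k) v \<le> - G k + L0 * norm (v - dx k)"
    using dd_lip[OF xk_rho, of k v "dx k"] basic(6)[of k] by linarith
  define N where "N = \<psi> (x k) - \<psi> (x k + a *\<^sub>R v)"
  have NE: "N = - E k - a * dirderiv \<psi> (x k) v" unfolding N_def E_def a_def v_def by simp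
  have "a * dirderiv \<psi> (x k) v \<le> a * (- G k + L0 * norm (v - dx k))"
    using dd a0 by (intro mult_left_mono) auto
  then have N1: "N \<ge> a * G k - a * L0 * norm (v - dx k) - \<bar>E k\<bar>"
    unfolding NE by (simp add: algebra_simps)
  define Dn where "Dn = pred k (a *\<^sub>R v)"
  have Dpos: "Dn > 0" unfolding Dn_def a_def v_def by (rule pred_alpha_pos)
  have Dn1: "Dn \<le> a * G k + KB/2 * a\<^sup>2"
  proof -
    have "inner (dx k) v \<le> 1"
      using norm_cauchy_schwarz[of "dx k" v] basic(1)[of k] nv by simp
    then have "G k * inner (dx k) v \<le> G k * 1" using basic(4)[of k] by (intro mult_left_mono) auto
    then have i2: "a * (G k * inner (dx k) v) \<le> a * G k" using a0 by (intro mult_left_mono) auto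
    have "pred k (a *\<^sub>R v) \<le> G k * inner (dx k) (a *\<^sub>R v) + KB/2 * (norm (a *\<^sub>R v))\<^sup>2"
      by (rule pred_upper)
    also have "G k * inner (dx k) (a *\<^sub>R v) = a * (G k * inner (dx k) v)" by simp
    also have "(norm (a *\<^sub>R v))\<^sup>2 = a\<^sup>2" using nv a0 by simp
    finally show ?thesis using i2 unfolding Dn_def by linarith
  qed
  have c2: "(1 - \<eta>1) * G k \<ge> (1 - \<eta>1) * ee" using Ge params by (intro mult_left_mono) auto
  have "\<bar>E k\<bar> = a * (\<bar>E k\<bar> / a)" using a0 by simp
  have "a * ((1 - \<eta>1) * ee) > a * (L0 * norm (v - dx k) + \<bar>E k\<bar> / a + \<eta>1 * a * KB / 2)"
    using cond a0 unfolding a_def[symmetric] v_def[symmetric] by (intro mult_strict_left_mono) auto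
  then have "a * ((1 - \<eta>1) * G k) > a * L0 * norm (v - dx k) + \<bar>E k\<bar> + \<eta>1 * (KB/2 * a\<^sup>2)"
    using a0 c2 mult_left_mono[OF c2, of a] by (simp add: algebra_simps power2_eq_square)
  then have "N > \<eta>1 * (a * G k + KB/2 * a\<^sup>2)" using N1 by (simp add: algebra_simps)
  moreover have "\<eta>1 * (a * G k + KB/2 * a\<^sup>2) \<ge> \<eta>1 * Dn" using Dn1 params by (intro mult_left_mono) auto
  ultimately have "N > \<eta>1 * Dn" by linarith
  then have "N / Dn > \<eta>1" using Dpos by (simp add: pos_less_divide_eq)
  moreover have "\<rho>2 k = N / Dn" unfolding rho2_def N_def Dn_def pred_def a_def v_def by simp
  ultimately show ?thesis by simp
qed

end



lemma arith_aux: "(A::real) < t \<Longrightarrow> Q < t \<Longrightarrow> t \<le> T / 8 \<Longrightarrow> 0 < T \<Longrightarrow> 2 * (A + 2 * Q) < T"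
  by (simp add: field_simps)

context alg_nst begin

lemma claimC: "\<exists>Dh>0. Dh \<le> \<Delta>max \<and> (\<exists>K. \<forall>k\<ge>K. \<Delta> k \<le> Dh \<longrightarrow> \<rho>2 k \<ge> \<eta>1)"
proof (rule ccontr)
  assume H: "\<not> ?thesis"
  define P where "P n k \<longleftrightarrow> k \<ge> K0 \<and> \<Delta> k \<le> 1 / real (Suc n) \<and> \<rho>2 k < \<eta>1" for n k
  have ex: "\<exists>k\<ge>K. P n k" for n K
  proof -
    define Dh where "Dh = min (1 / real (Suc n)) \<Delta>max"
    have "Dh > 0" "Dh \<le> \<Delta>max" unfolding Dh_def using params by auto
    then obtain k where "k \<ge> max K K0" "\<Delta> k \<le> Dh" "\<rho>2 k < \<eta>1" using H by (meson not_le)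
    then show ?thesis unfolding P_def Dh_def by auto
  qed
  obtain r where r: "\<forall>n. P n (r n) \<and> r n < r (Suc n)"
    using dependent_nat_choice[of P "\<lambda>n k k'. k < k'"] ex by (metis Suc_le_eq)
  have smr: "strict_mono r" using r by (simp add: strict_mono_Suc_iff)
  have Pr: "r n \<ge> K0" "\<Delta> (r n) \<le> 1 / real (Suc n)" "\<rho>2 (r n) < \<eta>1" for n using r unfolding P_def by auto
  have lim1: "(\<lambda>n. 1 / real (Suc n)) \<longlonglongrightarrow> 0" using LIMSEQ_Suc[OF lim_1_over_n] by simp
  have DeltaR: "(\<lambda>n. \<Delta> (r n)) \<longlonglongrightarrow> 0"
  proof (rule tendsto_sandwich[OF _ _ tendsto_const lim1])
    show "\<forall>\<^sub>F n in sequentially. 0 \<le> \<Delta> (r n)" by (intro always_eventually allI) (simp add: less_imp_le Delta_pos)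
    show "\<forall>\<^sub>F n in sequentially. \<Delta> (r n) \<le> 1 / real (Suc n)" using Pr(2) by (intro always_eventually allI) simp
  qed
  have alphaR: "(\<alpha> \<circ> r) \<longlonglongrightarrow> 0"
  proof (rule tendsto_sandwich[OF _ _ tendsto_const DeltaR])
    show "\<forall>\<^sub>F n in sequentially. 0 \<le> (\<alpha> \<circ> r) n" using sf_props(3) by (intro always_eventually allI) (simp add: less_imp_le)
    show "\<forall>\<^sub>F n in sequentially. (\<alpha> \<circ> r) n \<le> \<Delta> (r n)" using sf_props(2,4) by (intro always_eventually allI) (auto intro: order_trans)
  qed
  have conv: "convergent (x \<circ> r)" using LIMSEQ_subseq_LIMSEQ[OF x_conv smr] unfolding convergent_def by blast
  have Eo: "(\<lambda>l. E (r l)) \<in> o(\<lambda>l. \<alpha> (r l))"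
    using B3 smr conv alphaR unfolding E_def by blast
  define c3 where "c3 = (1 - \<eta>1) * ee / 3"
  have c3: "c3 > 0" unfolding c3_def using params rr_ee by simp
  have ev1: "eventually (\<lambda>l. \<bar>E (r l)\<bar> / \<alpha> (r l) \<le> c3) sequentially"
  proof -
    have "eventually (\<lambda>l. norm (E (r l)) \<le> c3 * norm (\<alpha> (r l))) sequentially"
      using landau_o.smallD[OF Eo c3] .
    then show ?thesis
    proof eventually_elim
      case (elim l)
      have "\<alpha> (r l) > 0" using sf_props by simp
      then show ?case using elim by (simp add: divide_le_eq)
    qed
  qed
  have ev2: "eventually (\<lambda>l. \<eta>1 * \<alpha> (r l) * KB / 2 < c3) sequentially"
  proof -
    have "(\<lambda>l. \<eta>1 * (\<alpha> \<circ> r) l * KB / 2) \<longlonglongrightarrow> \<eta>1 * 0 * KB / 2"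
      by (intro tendsto_intros alphaR) auto
    then have "(\<lambda>l. \<eta>1 * (\<alpha> \<circ> r) l * KB / 2) \<longlonglongrightarrow> 0" by simp
    from order_tendstoD(2)[OF this c3] show ?thesis by simp
  qed
  define \<theta> where "\<theta> = c3 / L0"
  have th: "\<theta> > 0" unfolding \<theta>_def using c3 L0(1) by simp
  define \<tau> where "\<tau> = min (\<theta>\<^sup>2 / 8) (1/4)"
  have tau: "\<tau> > 0" "\<tau> \<le> \<theta>\<^sup>2 / 8" "\<tau> \<le> 1/4" unfolding \<tau>_def using th by auto
  have ev3: "eventually (\<lambda>l. \<Delta> (r l) * KB / (2 * ee) < \<tau>) sequentially"
  proof -
    have "(\<lambda>l. \<Delta> (r l) * KB / (2 * ee)) \<longlonglongrightarrow> 0 * KB / (2 * ee)"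
      by (intro tendsto_intros DeltaR) (use rr_ee in auto)
    then have "(\<lambda>l. \<Delta> (r l) * KB / (2 * ee)) \<longlonglongrightarrow> 0" by simp
    from order_tendstoD(2)[OF this tau(1)] show ?thesis .
  qed
  obtain b where b: "b > 0" "\<And>t. 0 < t \<Longrightarrow> t < b \<Longrightarrow> ell t < \<tau>"
    using order_tendstoD(2)[OF ell_prop(3) tau(1)] unfolding eventually_at_right_field by auto
  have ev4: "eventually (\<lambda>l. ell (norm (s (r l))) < \<tau>) sequentially"
  proof -
    have "eventually (\<lambda>l. \<Delta> (r l) < b) sequentially" using order_tendstoD(2)[OF DeltaR b(1)] .
    then show ?thesis
    proof eventually_elim
      case (elim l)
      have "0 < norm (s (r l))" "norm (s (r l)) \<le> \<Delta> (r l)" using s_props by auto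
      then show ?case using b(2) elim by simp
    qed
  qed
  have "eventually (\<lambda>l. \<rho>2 (r l) > \<eta>1) sequentially"
    using ev1 ev2 ev3 ev4
  proof eventually_elim
    case (elim l)
    define k where "k = r l"
    have Ge: "G k \<ge> ee" using GK0 Pr(1) unfolding k_def by simp
    have nd: "norm (sgn (sf k) - dx k) < \<theta>"
    proof (cases "repl k")
      case True
      then show ?thesis using sf_cases[of k] th by auto
    next
      case False
      have "ell (norm (s k)) + 2 * (\<Delta> k * KB / (2 * ee)) \<le> 1"
        using elim tau unfolding k_def by linarith
      then have "(norm (sgn (sf k) - dx k))\<^sup>2 \<le> 2 * (ell (norm (s k)) + 2 * (\<Delta> k * KB / (2 * ee)))"
        using dir_bound[OF Ge False] by simp
      also have "\<dots> < \<theta>\<^sup>2"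
      proof -
        have "\<theta>\<^sup>2 > 0" using th by simp
        then show ?thesis using elim tau unfolding k_def by (intro arith_aux) auto
      qed
      finally have "(norm (sgn (sf k) - dx k))\<^sup>2 < \<theta>\<^sup>2" .
      then show ?thesis by (rule power2_less_imp_less) (use th in simp)
    qed
    have "L0 * norm (sgn (sf k) - dx k) < c3"
      using mult_strict_left_mono[OF nd L0(1)] L0(1) unfolding \<theta>_def by simp
    then have "(1 - \<eta>1) * ee > L0 * norm (sgn (sf k) - dx k) + \<bar>E k\<bar> / \<alpha> k + \<eta>1 * \<alpha> k * KB / 2"
      using elim unfolding c3_def k_def by linarith
    then show ?case using rho2_big[OF Ge] unfolding k_def by simp
  qed
  then obtain l where "\<rho>2 (r l) > \<eta>1" by (meson eventually_sequentially order_refl)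
  then show False using Pr(3)[of l] by simp
qed

end



context alg_nst begin

lemma Delta_lb: "\<exists>Dl>0. \<exists>K. \<forall>k\<ge>K. \<Delta> k \<ge> Dl"
proof -
  obtain Dh K1 where Dh: "Dh > 0" "Dh \<le> \<Delta>max" and K1: "\<And>k. k \<ge> K1 \<Longrightarrow> \<Delta> k \<le> Dh \<Longrightarrow> \<rho>2 k \<ge> \<eta>1"
    using claimC by blast
  define Dl where "Dl = min (\<Delta> K1) (r1 * Dh)"
  have Dl0: "Dl > 0" unfolding Dl_def using Delta_pos Dh params by simp
  have r1Dh: "r1 * Dh \<le> Dh" using Dh params by (intro mult_left_le_one_le) auto
  have stp: "\<Delta> (Suc k) \<ge> min (\<Delta> k) (r1 * Dh)" if "k \<ge> K1" for k
  proof -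
    have Dk: "\<Delta> k > 0" using Delta_pos by simp
    have up: "min \<Delta>max (r2 * \<Delta> k) \<ge> min (\<Delta> k) (r1 * Dh)"
    proof -
      have "r2 * \<Delta> k \<ge> 1 * \<Delta> k" using params Dk by (intro mult_right_mono) auto
      moreover have "r1 * Dh \<le> \<Delta>max" using r1Dh Dh by linarith
      ultimately have "min (r1 * Dh) (\<Delta> k) \<le> min \<Delta>max (r2 * \<Delta> k)"
        by (intro min.mono) auto
      then show ?thesis by (simp add: min.commute)
    qed
    show ?thesis
    proof (cases "\<rho>1 k \<ge> \<eta>1")
      case True then show ?thesis using update[rule_format, of k] up by (auto split: if_splits)
    next
      case False
      show ?thesis
      proof (cases "\<rho>2 k < \<eta>1")
        case True
        then have "\<Delta> k > Dh" using K1[OF that] by (meson not_le)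
        then have "r1 * \<Delta> k \<ge> r1 * Dh" using params by (intro mult_left_mono) auto
        then show ?thesis using update[rule_format, of k] False True by auto
      next
        case F2: False
        then show ?thesis using update[rule_format, of k] False up by (auto split: if_splits)
      qed
    qed
  qed
  have "\<Delta> k \<ge> Dl" if "k \<ge> K1" for k
    using that
  proof (induction k rule: dec_induct)
    case base then show ?case unfolding Dl_def by simp
  next
    case (step k)
    then show ?case using stp[OF step(1)] unfolding Dl_def by simp
  qed
  then show ?thesis using Dl0 by blast
qed

lemma sf_lb: "\<exists>\<sigma>>0. \<exists>K. \<forall>k\<ge>K. norm (sf k) \<ge> \<sigma>"
proof -
  obtain Dl K1 where Dl: "Dl > 0" "\<And>k. k \<ge> K1 \<Longrightarrow> \<Delta> k \<ge> Dl" using Delta_lb by blast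
  have ee0: "ee > 0" using rr_ee by simp
  define \<tau>0 where "\<tau>0 = min Dl (ee / KB)"
  have t0: "\<tau>0 > 0" "\<tau>0 \<le> Dl" "\<tau>0 * KB \<le> ee" unfolding \<tau>0_def using Dl ee0 KB(1)
    by (auto simp: min_def field_simps)
  define p0 where "p0 = min (\<gamma>1 / 2 * ee * min Dl (\<gamma>2 * ee)) (\<tau>0 * ee / 2)"
  have p00: "p0 > 0" unfolding p0_def using params ee0 Dl t0 by simp
  define C where "C = L0 + KB * Dmax / 2"
  have C0: "C > 0" unfolding C_def using L0(1) KB(1) Dmax_pos by (simp add: add_pos_nonneg)
  have "norm (sf k) \<ge> p0 / C" if k: "k \<ge> max K0 K1" for k
  proof -
    have Ge: "G k \<ge> ee" using GK0 k by simp
    have Dk: "\<Delta> k \<ge> Dl" using Dl(2) k by simp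
    have pp: "pred k (sf k) \<ge> p0"
    proof (cases "repl k")
      case True
      then have e: "sf k = sC k" using sf_cases[of k] by auto
      have "pred k (sC k) \<ge> pred k (\<tau>0 *\<^sub>R dx k)" using cauchy_min[of \<tau>0 k] t0 Dk by simp
      moreover have "pred k (\<tau>0 *\<^sub>R dx k) \<ge> \<tau>0 * G k / 2"
      proof -
        have b: "inner (dx k) (B k *v dx k) \<le> KB" using KB(2)[of "dx k" k] basic(1)[of k] by simp
        have "\<tau>0\<^sup>2 / 2 * inner (dx k) (B k *v dx k) \<le> \<tau>0\<^sup>2 / 2 * KB" using b by (intro mult_left_mono) auto
        moreover have "\<tau>0\<^sup>2 / 2 * KB \<le> \<tau>0 * G k / 2"
        proof -
          have "\<tau>0 * (\<tau>0 * KB) \<le> \<tau>0 * G k" using t0 Ge by (intro mult_left_mono) auto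
          then show ?thesis by (simp add: power2_eq_square algebra_simps)
        qed
        ultimately show ?thesis unfolding pred_tdx by simp
      qed
      moreover have "\<tau>0 * G k / 2 \<ge> \<tau>0 * ee / 2" using t0 Ge by (simp add: mult_left_mono)
      moreover have "\<tau>0 * ee / 2 \<ge> p0" unfolding p0_def by simp
      ultimately show ?thesis unfolding e by linarith
    next
      case False
      then have e: "sf k = s k" using sf_cases[of k] by auto
      have "min Dl (\<gamma>2 * ee) \<le> min (\<Delta> k) (\<gamma>2 * G k)"
        using Dk Ge params by (intro min.mono mult_left_mono) auto
      then have "\<gamma>1 / 2 * ee * min Dl (\<gamma>2 * ee) \<le> \<gamma>1 / 2 * G k * min (\<Delta> k) (\<gamma>2 * G k)"
        using Ge params ee0 Dl by (intro mult_mono) auto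
      moreover have "p0 \<le> \<gamma>1 / 2 * ee * min Dl (\<gamma>2 * ee)" unfolding p0_def by simp
      ultimately show ?thesis using s_props(2)[of k] unfolding e by linarith
    qed
    have ns: "norm (sf k) \<le> Dmax" using sf_props(2)[of k] Delta_le[of k] by linarith
    have "pred k (sf k) \<le> G k * norm (sf k) + KB/2 * (norm (sf k))\<^sup>2" by (rule pred_upper2)
    also have "G k * norm (sf k) \<le> L0 * norm (sf k)" using G_le by (intro mult_right_mono) auto
    also have "KB/2 * (norm (sf k))\<^sup>2 \<le> KB/2 * (Dmax * norm (sf k))"
      using ns KB(1) by (intro mult_left_mono) (auto simp: power2_eq_square intro: mult_right_mono)
    finally have "p0 \<le> C * norm (sf k)" using pp unfolding C_def by (simp add: algebra_simps)
    then show ?thesis using C0 by (simp add: divide_le_eq mult.commute)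
  qed
  moreover have "p0 / C > 0" using p00 C0 by simp
  ultimately show ?thesis by blast
qed

lemma good_dec:
  assumes "\<gamma> > 0"
  shows "\<exists>D0>0. \<exists>K. \<forall>k\<ge>K. Gamma_pt \<psi> (x k) \<ge> ereal \<gamma> \<longrightarrow> dec k \<ge> D0 \<or> (xt k = x k \<and> \<Delta> (Suc k) = r1 * \<Delta> k)"
proof -
  obtain e' where e': "e' > 0" "\<And>k. Gamma_pt \<psi> (x k) \<ge> ereal \<gamma> \<Longrightarrow> \<Gamma>s (x k) (sgn (sf k)) \<ge> ereal e'"
    using B4 assms by blast
  obtain \<sigma> Ks where sg: "\<sigma> > 0" "\<And>k. k \<ge> Ks \<Longrightarrow> norm (sf k) \<ge> \<sigma>" using sf_lb by blast
  obtain Dl K1 where Dl: "Dl > 0" "\<And>k. k \<ge> K1 \<Longrightarrow> \<Delta> k \<ge> Dl" using Delta_lb by blast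
  have ee0: "ee > 0" using rr_ee by simp
  define \<beta> where "\<beta> = min e' \<sigma>"
  have b0: "\<beta> > 0" unfolding \<beta>_def using e' sg by simp
  define D1 where "D1 = \<eta>1 * (\<gamma>1 / 2 * ee * min Dl (\<gamma>2 * ee))"
  define D2 where "D2 = \<eta> * (\<beta> * cg ee)"
  have cge: "cg ee > 0" using cg_cm_mono[of ee ee] ee0 by simp
  have D10: "D1 > 0" unfolding D1_def using params ee0 Dl by simp
  have D20: "D2 > 0" unfolding D2_def using params b0 cge by simp
  have "dec k \<ge> min D1 D2 \<or> (xt k = x k \<and> \<Delta> (Suc k) = r1 * \<Delta> k)"
    if k: "k \<ge> max (max K0 Ks) K1" and gd: "Gamma_pt \<psi> (x k) \<ge> ereal \<gamma>" for k
  proof -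
    have Ge: "G k \<ge> ee" using GK0 k by simp
    have Dk: "\<Delta> k \<ge> Dl" using Dl(2) k by simp
    have al: "\<alpha> k \<ge> \<beta>"
    proof -
      have "\<Gamma>s (x k) (sgn (sf k)) > 0" using safeguard_pos by blast
      moreover have "norm (sf k) > 0" using sf_props by simp
      ultimately have "\<alpha> k \<ge> min e' (norm (sf k))"
        unfolding alpha_def using ereal_min_lemma(3) e' gd by blast
      moreover have "min e' (norm (sf k)) \<ge> \<beta>" unfolding \<beta>_def using sg(2)[of k] k by (simp add: min.coboundedI2)
      ultimately show ?thesis by linarith
    qed
    show ?thesis
    proof (cases "\<rho>1 k \<ge> \<eta>1")
      case True
      have "min Dl (\<gamma>2 * ee) \<le> min (\<Delta> k) (\<gamma>2 * G k)"
        using Dk Ge params by (intro min.mono mult_left_mono) auto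
      then have "\<gamma>1 / 2 * ee * min Dl (\<gamma>2 * ee) \<le> \<gamma>1 / 2 * G k * min (\<Delta> k) (\<gamma>2 * G k)"
        using Ge params ee0 Dl by (intro mult_mono) auto
      then have "\<gamma>1 / 2 * ee * min Dl (\<gamma>2 * ee) \<le> pred k (s k)" using s_props(2)[of k] by linarith
      then have "D1 \<le> \<eta>1 * pred k (s k)" unfolding D1_def using params by (intro mult_left_mono) auto
      moreover have "min D1 D2 \<le> D1" by simp
      ultimately show ?thesis using dec_rho1(2)[OF True] by linarith
    next
      case False
      show ?thesis
      proof (cases "\<rho>2 k \<ge> \<eta>")
        case True
        have "cg ee \<le> cg (G k)" using cg_cm_mono[OF ee0 Ge] by simp
        then have "\<beta> * cg ee \<le> \<alpha> k * cg (G k)" using al b0 cge by (intro mult_mono) auto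
        then have "D2 \<le> \<eta> * (\<alpha> k * cg (G k))" unfolding D2_def using params by (intro mult_left_mono) auto
        moreover have "min D1 D2 \<le> D2" by simp
        ultimately show ?thesis using dec_rho2(2)[OF _ True] False by linarith
      next
        case F2: False then show ?thesis using dec_rej[of k] False by simp
      qed
    qed
  qed
  moreover have "min D1 D2 > 0" using D10 D20 by simp
  ultimately show ?thesis by blast
qed

lemma eps_anti: "a \<le> b \<Longrightarrow> \<epsilon> b \<le> \<epsilon> a"
proof -
  have "decseq \<epsilon>" using eps_seq(2) by (intro decseq_SucI) (simp add: less_imp_le)
  then show "a \<le> b \<Longrightarrow> \<epsilon> b \<le> \<epsilon> a" by (rule decseqD)
qed

lemma stop_Suc: "Gamma_pt \<psi> (x (Suc k)) \<ge> ereal (\<epsilon> (c (Suc k) (level S m (x (Suc k)))))"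
  using TR[of k] by blast

lemma no_good:
  assumes "\<gamma> > 0"
  shows "\<exists>K. \<forall>k\<ge>K. \<not> Gamma_pt \<psi> (x k) \<ge> ereal \<gamma>"
proof -
  obtain D0 K where D0: "D0 > 0" and
    K: "\<And>k. k \<ge> K \<Longrightarrow> Gamma_pt \<psi> (x k) \<ge> ereal \<gamma> \<Longrightarrow> dec k \<ge> D0 \<or> (xt k = x k \<and> \<Delta> (Suc k) = r1 * \<Delta> k)"
    using good_dec[OF assms] by blast
  obtain K' where K': "\<And>k. k \<ge> K' \<Longrightarrow> dec k < D0"
    using order_tendstoD(2)[OF summable_LIMSEQ_zero[OF dec_summable] D0] unfolding eventually_sequentially by blast
  obtain Dl Kd where Dl: "Dl > 0" "\<And>k. k \<ge> Kd \<Longrightarrow> \<Delta> k \<ge> Dl" using Delta_lb by blast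
  define Ks where "Ks = Suc (max (max K K') Kd)"
  have "\<not> Gamma_pt \<psi> (x k) \<ge> ereal \<gamma>" if k: "k \<ge> Ks" for k
  proof
    assume g0: "Gamma_pt \<psi> (x k) \<ge> ereal \<gamma>"
    have inv: "x (k + j) = x k \<and> \<Delta> (k + j) = r1 ^ j * \<Delta> k" for j
    proof (induction j)
      case 0 then show ?case by simp
    next
      case (Suc j)
      define k' where "k' = k + j"
      have k': "k' \<ge> K" "k' \<ge> K'" "k' \<ge> 1" using k unfolding Ks_def k'_def by auto
      have g: "Gamma_pt \<psi> (x k') \<ge> ereal \<gamma>" using g0 Suc unfolding k'_def by simp
      have rej: "xt k' = x k'" "\<Delta> (Suc k') = r1 * \<Delta> k'" using K[OF k'(1) g] K'[OF k'(2)] by auto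
      obtain k'' where k'': "k' = Suc k''" using k'(3) by (cases k') auto
      have st: "Gamma_pt \<psi> (x k') \<ge> ereal (\<epsilon> (c k' (level S m (x k'))))"
        unfolding k'' by (rule stop_Suc)
      have "x (Suc k') = x k'"
        using trunc_run_stop[OF truncation[rule_format, of k'], unfolded rej(1), OF st] by simp
      then show ?case using Suc rej(2) unfolding k'_def by simp
    qed
    have "(\<lambda>j. r1 ^ j) \<longlonglongrightarrow> 0" using params by (intro LIMSEQ_realpow_zero) auto
    moreover have "Dl / Dmax > 0" using Dl Dmax_pos by simp
    ultimately obtain j where j: "r1 ^ j < Dl / Dmax"
      using order_tendstoD(2) eventually_sequentially by (metis order_refl)
    have "\<Delta> (k + j) = r1 ^ j * \<Delta> k" using inv by simp
    also have "\<dots> \<le> r1 ^ j * Dmax" using Delta_le params by (intro mult_left_mono) auto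
    also have "\<dots> < Dl" using j Dmax_pos by (simp add: pos_less_divide_eq)
    finally have "\<Delta> (k + j) < Dl" .
    moreover have "Kd \<le> k + j" using k unfolding Ks_def by simp
    ultimately show False using Dl(2)[of "k + j"] by simp
  qed
  then show ?thesis by blast
qed

lemma c_mono: "k \<le> k' \<Longrightarrow> c k j \<le> c k' j"
  using lift_Suc_mono_le[of "\<lambda>k. c k j"] TR by blast

lemma level_le: "level S m y \<le> m"
  using level_props[of S m y] trunc unfolding truncatable_def by blast

lemma final: False
proof -
  define bnd where "bnd j \<longleftrightarrow> (\<exists>N. \<forall>k. c k j \<le> N)" for j
  have "\<forall>j\<in>{..m}. \<exists>N. bnd j \<longrightarrow> (\<forall>k. c k j \<le> N)" unfolding bnd_def by blast
  then obtain Nf where Nf: "\<And>j. j \<in> {..m} \<Longrightarrow> bnd j \<Longrightarrow> \<forall>k. c k j \<le> Nf j" by metis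
  define Nb where "Nb = (\<Sum>j\<le>m. Nf j)"
  have Nb: "c k j \<le> Nb" if "j \<le> m" "bnd j" for k j
  proof -
    have "Nf j \<le> Nb" unfolding Nb_def using that by (intro member_le_sum) auto
    then show ?thesis using Nf[of j] that by (meson atMost_iff order_trans)
  qed
  have gpos: "\<epsilon> Nb > 0" using eps_seq(1) by simp
  obtain K where K: "\<And>k. k \<ge> K \<Longrightarrow> \<not> Gamma_pt \<psi> (x k) \<ge> ereal (\<epsilon> Nb)"
    using no_good[OF gpos] by blast
  show False
  proof (cases "\<forall>j\<le>m. bnd j")
    case True
    define j where "j = level S m (x (Suc K))"
    have "c (Suc K) j \<le> Nb" using Nb True level_le unfolding j_def by simp
    then have "\<epsilon> Nb \<le> \<epsilon> (c (Suc K) j)" by (rule eps_anti)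
    then have "Gamma_pt \<psi> (x (Suc K)) \<ge> ereal (\<epsilon> Nb)"
      using stop_Suc[of K] unfolding j_def by (meson ereal_less_eq(3) order_trans)
    then show False using K[of "Suc K"] by simp
  next
    case False
    define J where "J = {j. j \<le> m \<and> \<not> bnd j}"
    have fJ: "finite J" "J \<noteq> {}" unfolding J_def using False by auto
    define i where "i = Max J"
    have iJ: "i \<le> m" "\<not> bnd i" using Max_in[OF fJ] unfolding i_def J_def by auto
    have above: "bnd j" if "i < j" "j \<le> m" for j
    proof (rule ccontr)
      assume "\<not> bnd j"
      then have "j \<in> J" using that unfolding J_def by simp
      then have "j \<le> i" unfolding i_def using Max_ge[OF fJ(1)] by simp
      then show False using that by simp
    qed
    have inc: "\<exists>k\<ge>K. c k i < c (Suc k) i"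
    proof (rule ccontr)
      assume "\<not> ?thesis"
      then have nc: "\<And>k. k \<ge> K \<Longrightarrow> c (Suc k) i \<le> c k i" by (meson not_le)
      have "c k i \<le> c K i" for k
      proof (cases "k \<le> K")
        case True then show ?thesis by (rule c_mono)
      next
        case False
        then have "K \<le> k" by simp
        then show ?thesis
        proof (induction k rule: dec_induct)
          case base then show ?case by simp
        next
          case (step k) then show ?case using nc[of k] by simp
        qed
      qed
      then have "bnd i" unfolding bnd_def by blast
      then show False using iJ by simp
    qed
    then obtain k where k: "k \<ge> K" "c k i < c (Suc k) i" by blast
    define j where "j = level S m (x (Suc k))"
    have ij: "i < j" using TR[of k] k(2) unfolding j_def by blast
    have "bnd j" using above[OF ij] level_le unfolding j_def by simp
    then have "c (Suc k) j \<le> Nb" using Nb level_le unfolding j_def by simp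
    then have "\<epsilon> Nb \<le> \<epsilon> (c (Suc k) j)" by (rule eps_anti)
    then have "Gamma_pt \<psi> (x (Suc k)) \<ge> ereal (\<epsilon> Nb)"
      using stop_Suc[of k] unfolding j_def by (meson ereal_less_eq(3) order_trans)
    then show False using K[of "Suc k"] k(1) by simp
  qed
qed

end

lemma (in alg) main: "stationary gradf \<phi> xstar"
proof (rule ccontr)
  assume "\<not> stationary gradf \<phi> xstar"
  then interpret alg_nst f gradf \<phi> u d \<Gamma>s S m \<delta> \<kappa> T \<eta> \<eta>1 \<eta>2 r1 r2 \<Delta>max \<gamma>1 \<gamma>2 \<epsilon> ell x \<Delta> B s \<alpha>C xt c xstar
      \<psi> gp g mdl sC \<rho>1 \<alpha>0 repl sf \<alpha> \<rho>2
    by unfold_locales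
  show False by (rule final)
qed


theorem theorem4p9:
  fixes f :: "real^'n \<Rightarrow> real" and gradf :: "real^'n \<Rightarrow> real^'n" and \<phi> :: "real^'n \<Rightarrow> real"
    and u :: "real^'n \<Rightarrow> real" and d :: "real^'n \<Rightarrow> real^'n"
    and \<Gamma>s :: "real^'n \<Rightarrow> real^'n \<Rightarrow> ereal"
    and S :: "nat \<Rightarrow> (real^'n) set" and m :: nat and \<delta> :: ereal and \<kappa> :: real
    and T :: "real^'n \<Rightarrow> real \<Rightarrow> real^'n"
    and \<eta> \<eta>1 \<eta>2 r1 r2 \<Delta>max \<gamma>1 \<gamma>2 :: real
    and \<epsilon> :: "nat \<Rightarrow> real" and ell :: "real \<Rightarrow> real"
    and x :: "nat \<Rightarrow> real^'n" and \<Delta> :: "nat \<Rightarrow> real" and B :: "nat \<Rightarrow> real^'n^'n"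
    and s :: "nat \<Rightarrow> real^'n" and \<alpha>C :: "nat \<Rightarrow> real" and xt :: "nat \<Rightarrow> real^'n"
    and c :: "nat \<Rightarrow> nat \<Rightarrow> nat" and xstar :: "real^'n"
  defines "\<psi> \<equiv> \<lambda>y. f y + \<phi> y"
  \<comment> \<open>f continuously differentiable, phi convex\<close>
  assumes f_grad: "\<forall>y. GDERIV f y :> gradf y"
    and f_C1: "continuous_on UNIV gradf"
    and phi_convex: "convex_on UNIV \<phi>"
  \<comment> \<open>pseudo-gradient g(y) = u(y) d(y)\<close>
  defines "gp \<equiv> \<lambda>y. u y *\<^sub>R d y"
  assumes pseudo_grad: "\<forall>y. (stationary gradf \<phi> y \<longrightarrow> d y = 0 \<and> u y = 0) \<and>
      (\<not> stationary gradf \<phi> y \<longrightarrow> norm (d y) = 1 \<and> dirderiv \<psi> y (d y) < 0 \<and>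
          dirderiv \<psi> y (d y) \<le> u y \<and> u y < 0)"
  \<comment> \<open>stepsize safeguard\<close>
    and safeguard_pos: "\<forall>y v. \<Gamma>s y v > 0"
  \<comment> \<open>psi can be truncated\<close>
    and trunc: "truncatable (Gamma_pt \<psi>) S m \<delta> \<kappa> T"
  \<comment> \<open>algorithm parameters\<close>
    and params: "0 < \<eta>" "\<eta> < \<eta>1" "\<eta>1 < \<eta>2" "\<eta>2 < 1" "0 < r1" "r1 < 1" "1 < r2"
      "\<Delta>max > 0" "\<gamma>1 > 0" "\<gamma>2 > 0"
    and eps_seq: "\<forall>j. \<epsilon> j > 0" "\<forall>j. \<epsilon> (Suc j) < \<epsilon> j" "summable \<epsilon>" "\<forall>j. ereal (\<epsilon> j) \<le> \<delta>"
    and ell_prop: "\<forall>a b. 0 < a \<longrightarrow> a \<le> b \<longrightarrow> ell b \<le> ell a" "\<forall>a>0. 0 \<le> ell a \<and> ell a \<le> 1/2"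
      "(ell \<longlongrightarrow> 0) (at_right 0)"
    and init: "\<Delta> 0 > 0" "c 0 = (\<lambda>i. 0)"
  \<comment> \<open>quantities of iteration k\<close>
  defines "g \<equiv> \<lambda>k. gp (x k)"
  defines "mdl \<equiv> \<lambda>k v. \<psi> (x k) + inner (g k) v + 1/2 * inner v (B k *v v)"
  defines "sC \<equiv> \<lambda>k. - (\<alpha>C k) *\<^sub>R g k"
  defines "\<rho>1 \<equiv> \<lambda>k. (\<psi> (x k) - \<psi> (x k + s k)) / (mdl k 0 - mdl k (s k))"
  defines "\<alpha>0 \<equiv> \<lambda>k. real_of_ereal (min (\<Gamma>s (x k) (sgn (s k))) (ereal (norm (s k))))"
  defines "repl \<equiv> \<lambda>k. mdl k 0 - mdl k (\<alpha>0 k *\<^sub>R sgn (s k))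
                      < \<alpha>0 k / (2 * norm (s k)) * (mdl k 0 - mdl k (s k))"
  defines "sf \<equiv> \<lambda>k. if repl k then sC k else s k"
  defines "\<alpha> \<equiv> \<lambda>k. real_of_ereal (min (\<Gamma>s (x k) (sgn (sf k))) (ereal (norm (sf k))))"
  defines "\<rho>2 \<equiv> \<lambda>k. (\<psi> (x k) - \<psi> (x k + \<alpha> k *\<^sub>R sgn (sf k)))
                   / (mdl k 0 - mdl k (\<alpha> k *\<^sub>R sgn (sf k)))"
  \<comment> \<open>the algorithm does not terminate\<close>
  assumes no_stop: "\<forall>k. g k \<noteq> 0"
  \<comment> \<open>Cauchy point\<close>
    and cauchy: "\<forall>k. 0 \<le> \<alpha>C k \<and> \<alpha>C k \<le> \<Delta> k / norm (g k) \<and>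
        (\<forall>t. 0 \<le> t \<and> t \<le> \<Delta> k / norm (g k) \<longrightarrow> mdl k (- (\<alpha>C k) *\<^sub>R g k) \<le> mdl k (- t *\<^sub>R g k))"
  \<comment> \<open>trial step\<close>
    and step: "\<forall>k. norm (s k) \<le> \<Delta> k \<and>
        mdl k 0 - mdl k (s k) \<ge> \<gamma>1 / 2 * norm (g k) * min (\<Delta> k) (\<gamma>2 * norm (g k)) \<and>
        mdl k 0 - mdl k (s k) \<ge> (1 - ell (norm (s k))) * (mdl k 0 - mdl k (sC k))"
  \<comment> \<open>radius update and trial iterate\<close>
    and update: "\<forall>k. (\<rho>1 k \<ge> \<eta>1 \<longrightarrow> xt k = x k + s k \<and>
            \<Delta> (Suc k) = (if \<rho>1 k > \<eta>2 then min \<Delta>max (r2 * \<Delta> k) else \<Delta> k)) \<and>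
        (\<rho>1 k < \<eta>1 \<longrightarrow>
            \<Delta> (Suc k) = (if \<rho>2 k < \<eta>1 then r1 * \<Delta> k
                          else if \<rho>2 k > \<eta>2 then min \<Delta>max (r2 * \<Delta> k) else \<Delta> k) \<and>
            xt k = (if \<rho>2 k \<ge> \<eta> then x k + \<alpha> k *\<^sub>R sgn (sf k) else x k))"
  \<comment> \<open>truncation step\<close>
    and truncation: "\<forall>k. trunc_run (Gamma_pt \<psi>) S m \<epsilon> T (xt k) (c k) (x (Suc k)) (c (Suc k))"
  \<comment> \<open>(A.1), (A.2)\<close>
    and A1: "bdd_below (range \<psi>)"
    and A2: "\<forall>y. gp y \<noteq> 0 \<longrightarrow> (\<exists>r>0. \<exists>e>0. \<forall>z\<in>ball y r. norm (gp z) \<ge> e)"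
  \<comment> \<open>(B.1)--(B.4)\<close>
    and B1: "\<exists>R>0. \<forall>k. x k \<in> ball 0 R"
    and B2: "\<exists>\<kappa>B>0. \<forall>k. norm (B k) \<le> \<kappa>B"
    and B3: "\<forall>r::nat \<Rightarrow> nat. strict_mono r \<longrightarrow> convergent (x \<circ> r) \<longrightarrow> (\<alpha> \<circ> r) \<longlonglongrightarrow> 0 \<longrightarrow>
        (\<lambda>l. \<psi> (x (r l) + \<alpha> (r l) *\<^sub>R sgn (sf (r l))) - \<psi> (x (r l))
              - \<alpha> (r l) * dirderiv \<psi> (x (r l)) (sgn (sf (r l)))) \<in> o(\<lambda>l. \<alpha> (r l))"
    and B4: "\<forall>e>0. \<exists>e'>0. \<forall>k. Gamma_pt \<psi> (x k) \<ge> ereal e \<longrightarrow> \<Gamma>s (x k) (sgn (sf k)) \<ge> ereal e'"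
  \<comment> \<open>accumulation point\<close>
    and accum: "\<exists>r::nat \<Rightarrow> nat. strict_mono r \<and> (x \<circ> r) \<longlonglongrightarrow> xstar"
  shows "stationary gradf \<phi> xstar"
proof -
  interpret alg f gradf \<phi> u d \<Gamma>s S m \<delta> \<kappa> T \<eta> \<eta>1 \<eta>2 r1 r2 \<Delta>max \<gamma>1 \<gamma>2 \<epsilon> ell x \<Delta> B s \<alpha>C xt c xstar
      \<psi> gp g mdl sC \<rho>1 \<alpha>0 repl sf \<alpha> \<rho>2
    by (unfold_locales; (fact assms | simp only: \<psi>_def gp_def g_def mdl_def sC_def \<rho>1_def \<alpha>0_def repl_def sf_def \<alpha>_def \<rho>2_def))
  show ?thesis by (rule main)
qed

end
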